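(* Let $C_1\ge 0$, $C_2\ge 0$ with $C_1+C_2=1$, and let $0<\alpha_2<\alpha_1<1$. Let $Y_{\alpha_1,\alpha_2}$ be the inverse mixed stable subordinator with these parameters. Then $$\operatorname{Var}\big(Y_{\alpha_1,\alpha_2}(t)\big)\sim \frac{t^{2\alpha_2}}{C_2^2}\left(\frac{2}{\Gamma(2\alpha_2+1)}-\frac{1}{(\Gamma(\alpha_2+1))^2}\right),\qquad t\to\infty.$$
   Context: The mixed stable subordinator $L_{\alpha_1,\alpha_2}=\{L_{\alpha_1,\alpha_2}(t)\}_{t\ge0}$ is the subordinator (Lévy process with non-decreasing paths) with $\mathbb{E}\,e^{-uL_{\alpha_1,\alpha_2}(t)}=e^{-t(C_1u^{\alpha_1}+C_2u^{\alpha_2})}$ for $u\ge0$; equivalently $L_{\alpha_1,\alpha_2}(t)\overset{d}{=}C_1^{1/\alpha_1}L_{\alpha_1}(t)+C_2^{1/\alpha_2}L_{\alpha_2}(t)$ with $L_{\alpha_1},L_{\alpha_2}$ independent stable subordinators (Laplace exponents $u^{\alpha_1}$, $u^{\alpha_2}$). The inverse mixed stable subordinator is $Y_{\alpha_1,\alpha_2}(t)=\inf\{u\ge0: L_{\alpha_1,\alpha_2}(u)>t\}$, $t\ge0$. The notation $f(t)\sim g(t)$ means $f(t)/g(t)\to1$. *)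

theory Defs
  imports "HOL-Probability.Probability" "HOL-Library.Landau_Symbols"
begin

definition mixed_laplace_exponent :: "real \<Rightarrow> real \<Rightarrow> real \<Rightarrow> real \<Rightarrow> real \<Rightarrow> real" where
  "mixed_laplace_exponent C1 C2 a1 a2 u = C1 * u powr a1 + C2 * u powr a2"

text \<open>L is (a version of) the mixed stable subordinator on the probability space M:
  a process with L(0)=0, non-decreasing paths, independent increments, and
  E exp(-u (L t - L s)) = exp(-(t-s)(C1 u^a1 + C2 u^a2)) for 0 <= s <= t, u >= 0.
  These determine all finite-dimensional distributions of L.\<close>
definition mixed_stable_subordinator ::
  "'a measure \<Rightarrow> real \<Rightarrow> real \<Rightarrow> real \<Rightarrow> real \<Rightarrow> (real \<Rightarrow> 'a \<Rightarrow> real) \<Rightarrow> bool" where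
  "mixed_stable_subordinator M C1 C2 a1 a2 L \<longleftrightarrow>
     prob_space M \<and>
     (\<forall>t\<ge>0. L t \<in> borel_measurable M) \<and>
     (\<forall>\<omega>\<in>space M. L 0 \<omega> = 0) \<and>
     (\<forall>\<omega>\<in>space M. mono_on {0..} (\<lambda>t. L t \<omega>)) \<and>
     (\<forall>(n::nat) (t::nat \<Rightarrow> real). 0 \<le> t 0 \<and> (\<forall>i<n. t i < t (Suc i)) \<longrightarrow>
        prob_space.indep_vars M (\<lambda>_. borel) (\<lambda>i \<omega>. L (t (Suc i)) \<omega> - L (t i) \<omega>) {..<n}) \<and>
     (\<forall>s t u. 0 \<le> s \<and> s \<le> t \<and> 0 \<le> u \<longrightarrow>
        prob_space.expectation M (\<lambda>\<omega>. exp (- u * (L t \<omega> - L s \<omega>)))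
          = exp (- (t - s) * mixed_laplace_exponent C1 C2 a1 a2 u))"

definition inverse_subordinator :: "(real \<Rightarrow> 'a \<Rightarrow> real) \<Rightarrow> real \<Rightarrow> 'a \<Rightarrow> real" where
  "inverse_subordinator L t \<omega> = Inf {u. 0 \<le> u \<and> L u \<omega> > t}"

end

theory Submission
  imports Defs
begin

lemma gamma_ineq:
  fixes a :: real assumes a: "0 < a" "a < 1"
  shows "Gamma (2*a+1) < 2 * (Gamma (a+1))^2"
proof -
  have B: "((\<lambda>t. t powr (a+1 - 1) * (1 - t) powr (a+1 - 1)) has_integral Beta (a+1) (a+1)) {0..1}"
    using a by (intro has_integral_Beta_real) auto
  have B2: "((\<lambda>t. t powr (2 - 1) * (1 - t) powr (2 - 1)) has_integral Beta 2 2) {0..1::real}"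
    by (intro has_integral_Beta_real) auto
  have B2v: "Beta 2 2 = (1::real)/6"
  proof -
    have "Gamma (2::real) = 1" using Gamma_fact[of 1] by simp
    moreover have "Gamma (4::real) = 6" using Gamma_fact[of 3] by (simp add: fact_numeral)
    ultimately show ?thesis by (simp add: Beta_def)
  qed
  define k where "k = (4::real) powr (1 - a)"
  have kpos: "k > 0" unfolding k_def by simp
  have B2': "((\<lambda>t. k * (t powr (2 - 1) * (1 - t) powr (2 - 1))) has_integral k * Beta 2 2) {0..1}"
    by (intro has_integral_mult_right B2)
  have le: "k * Beta 2 2 \<le> Beta (a+1) (a+1)"
  proof (rule has_integral_le[OF B2' B])
    fix t :: real assume t: "t \<in> {0..1}"
    define y where "y = t * (1 - t)"
    have y0: "0 \<le> y" using t unfolding y_def by auto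
    have y4: "y \<le> 1/4"
    proof -
      have "0 \<le> (t - 1/2)^2" by simp
      then show ?thesis unfolding y_def by (simp add: power2_eq_square algebra_simps)
    qed
    have lhs: "k * (t powr (2 - 1) * (1 - t) powr (2 - 1)) = k * y"
      using t by (simp add: y_def)
    have rhs: "t powr (a+1 - 1) * (1 - t) powr (a+1 - 1) = y powr a"
      using t by (simp add: y_def powr_mult)
    have "k * y \<le> y powr a"
    proof (cases "y = 0")
      case True then show ?thesis by simp
    next
      case False
      then have yp: "y > 0" using y0 by simp
      have "y powr (a - 1) \<ge> (1/4) powr (a - 1)"
        using yp y4 a by (intro powr_mono2') auto
      moreover have "(1/4::real) powr (a - 1) = k"
      proof -
        have "(1/4::real) powr (a-1) = 1 / 4 powr (a-1)" by (simp add: powr_divide)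
        also have "\<dots> = k" by (simp add: k_def powr_diff)
        finally show ?thesis .
      qed
      ultimately have "k * y \<le> y powr (a - 1) * y" using yp by simp
      also have "\<dots> = y powr a" using yp by (simp add: powr_diff)
      finally show ?thesis .
    qed
    then show "k * (t powr (2 - 1) * (1 - t) powr (2 - 1)) \<le> t powr (a+1 - 1) * (1 - t) powr (a+1 - 1)"
      unfolding lhs rhs .
  qed
  have conv: "exp ((1 - a) * (- ln 4) + a * 0) \<le> (1 - a) * exp (- ln 4) + a * exp 0"
    using convex_onD[OF exp_convex, of a "-ln 4" 0] a by simp
  have "(4::real) powr (a - 1) \<le> (1 - a) / 4 + a"
    using conv by (simp add: powr_def exp_minus algebra_simps)
  moreover have "1 / k = 4 powr (a - 1)"
    unfolding k_def by (simp add: powr_minus_divide[symmetric])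
  ultimately have k3: "3 / k < 1 + 2 * a"
  proof -
    assume h1: "(4::real) powr (a - 1) \<le> (1 - a) / 4 + a" and h2: "1 / k = 4 powr (a - 1)"
    have "3 / k = 3 * (4 powr (a-1))" using h2 by (metis times_divide_eq_right mult_1_right)
    also have "\<dots> < 1 + 2*a"
    proof -
      have "3 * 4 powr (a-1) \<le> 3*((1-a)/4 + a)" using mult_left_mono[OF h1, of 3] by simp
      moreover have "3*((1-a)/4 + a) < 1 + 2*a" using a by (simp add: field_simps)
      ultimately show ?thesis by (rule le_less_trans)
    qed
    finally show ?thesis .
  qed
  have "1/2 < (2*a+1) * Beta (a+1) (a+1)"
  proof -
    have "1/2 < (2*a+1) * (k/6)" using k3 kpos by (simp add: field_simps)
    also have "\<dots> \<le> (2*a+1) * Beta (a+1) (a+1)" using le B2v a by (intro mult_left_mono) auto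
    finally show ?thesis .
  qed
  moreover have "Beta (a+1) (a+1) = (Gamma (a+1))^2 / Gamma (2*a+2)"
    by (simp add: Beta_def power2_eq_square algebra_simps)
  moreover have "Gamma (2*a+2) = (2*a+1) * Gamma (2*a+1)"
    using Gamma_plus1[of "2*a+1"] a nonpos_Ints_nonpos[of "2*a+1"] by (auto simp: algebra_simps)
  ultimately have "1/2 < (2*a+1) * ((Gamma (a+1))^2 / ((2*a+1) * Gamma (2*a+1)))" by simp
  also have "\<dots> = (Gamma (a+1))^2 / Gamma (2*a+1)" using a by simp
  finally have "1/2 < (Gamma (a+1))^2 / Gamma (2*a+1)" .
  moreover have "Gamma (2*a+1) > 0" using a by (intro Gamma_real_pos) auto
  ultimately show ?thesis by (simp add: field_simps)
qed



lemma nn_to_int: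
  fixes f :: "real \<Rightarrow> real"
  assumes "f \<in> borel_measurable lborel" "\<And>x. 0 \<le> f x"
    "(\<integral>\<^sup>+x. ennreal (f x) \<partial>lborel) = ennreal I" "0 \<le> I"
  shows "integrable lborel f \<and> (\<integral>x. f x \<partial>lborel) = I"
proof
  show "integrable lborel f"
    using assms by (intro integrableI_nonneg) auto
  show "(\<integral>x. f x \<partial>lborel) = I"
    using assms by (subst integral_eq_nn_integral) auto
qed

lemma gamma_int_1:
  fixes r :: real assumes r: "r > 0"
  shows "integrable lborel (\<lambda>u. indicator {0..} u * (exp (- u) * u powr r))
     \<and> (\<integral>u. indicator {0..} u * (exp (- u) * u powr r) \<partial>lborel) = Gamma (1 + r)"
proof (rule nn_to_int)
  have hi: "((\<lambda>t. t powr (1 + r - 1) / exp t) has_integral Gamma (1+r)) {0..}"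
    using r by (intro Gamma_integral_real) auto
  have "(\<integral>\<^sup>+x. ennreal (x powr (1 + r - 1) / exp x) * indicator {0..} x \<partial>lborel) = ennreal (Gamma (1+r))"
    by (rule nn_integral_has_integral_lebesgue'[OF _ hi]) auto
  then show "(\<integral>\<^sup>+x. ennreal (indicator {0..} x * (exp (- x) * x powr r)) \<partial>lborel) = ennreal (Gamma (1+r))"
    by (subst (asm) nn_integral_cong[where v = "\<lambda>x. ennreal (indicator {0..} x * (exp (- x) * x powr r))"])
       (auto simp: indicator_def exp_minus field_simps)
  show "0 \<le> Gamma (1 + r)" using r by (intro less_imp_le Gamma_real_pos) auto
qed (auto simp: indicator_def)

lemma gamma_int:
  fixes r k :: real assumes r: "r > 0" and k: "k > 0"
  shows "integrable lborel (\<lambda>u. indicator {0..} u * (exp (- (k * u)) * u powr r))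
     \<and> (\<integral>u. indicator {0..} u * (exp (- (k * u)) * u powr r) \<partial>lborel) = Gamma (1 + r) / k powr (1 + r)"
proof -
  define f where "f u = indicator {0..} u * (exp (- u) * u powr r)" for u :: real
  have f1: "integrable lborel f" "(\<integral>u. f u \<partial>lborel) = Gamma (1 + r)"
    using gamma_int_1[OF r] unfolding f_def by auto
  have eq: "indicator {0..} u * (exp (- (k * u)) * u powr r) = f (0 + k * u) / k powr r" for u
    using k by (auto simp: f_def indicator_def powr_mult zero_le_mult_iff)
  have "integrable lborel (\<lambda>u. f (0 + k * u))"
    using f1 k by (intro lborel_integrable_real_affine) auto
  then have i: "integrable lborel (\<lambda>u. f (0 + k * u) / k powr r)" by simp
  have "(\<integral>u. f u \<partial>lborel) = \<bar>k\<bar> * (\<integral>u. f (0 + k * u) \<partial>lborel)"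
    using lborel_integral_real_affine[of k f 0] k by simp
  then have "(\<integral>u. f (0 + k * u) / k powr r \<partial>lborel) = Gamma (1 + r) / k / k powr r"
    using k f1 by simp
  also have "\<dots> = Gamma (1 + r) / k powr (1 + r)"
    using k by (simp add: powr_add field_simps)
  finally show ?thesis using i by (simp add: eq)
qed


definition tent :: "real \<Rightarrow> real \<Rightarrow> real \<Rightarrow> real" where
  "tent p q u = max 0 (q - \<bar>u - p\<bar>)"

lemma tent_cont: "continuous_on UNIV (tent p q)"
  unfolding tent_def by (intro continuous_intros)

lemma tent_supp: "u \<le> p - q \<or> p + q \<le> u \<Longrightarrow> tent p q u = 0"
  unfolding tent_def by auto

lemma tent_nonneg: "tent p q u \<ge> 0"
  unfolding tent_def by auto

lemma tent_meas[measurable]: "tent p q \<in> borel_measurable borel"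
  by (rule borel_measurable_continuous_onI[OF tent_cont])

lemma tent_int: "integrable lborel (tent p q)"
proof -
  have "integrable lborel (\<lambda>x. indicator {p - q..p + q} x *\<^sub>R tent p q x)"
    by (intro borel_integrable_compact continuous_on_subset[OF tent_cont]) auto
  moreover have "(\<lambda>x. indicator {p - q..p + q} x *\<^sub>R tent p q x) = tent p q"
    by (auto simp: indicator_def tent_def fun_eq_iff)
  ultimately show ?thesis by simp
qed

lemma tent_pos: assumes q: "q > 0" shows "(\<integral>u. tent p q u \<partial>lborel) > 0"
proof -
  have "(\<integral>u. q / 2 * indicator {p - q/2..p + q/2} u \<partial>lborel) \<le> (\<integral>u. tent p q u \<partial>lborel)"
  proof (rule integral_mono)
    show "integrable lborel (\<lambda>u. q / 2 * indicator {p - q / 2..p + q / 2} u :: real)"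
      by (intro integrable_mult_right integrable_real_indicator) (auto simp: emeasure_lborel_Icc_eq)
    show "integrable lborel (tent p q)" by (rule tent_int)
    fix u show "q / 2 * indicator {p - q / 2..p + q / 2} u \<le> tent p q u"
      using q by (auto simp: indicator_def tent_def abs_if)
  qed
  moreover have "(\<integral>u. q / 2 * indicator {p - q/2..p + q/2} u \<partial>lborel) = q / 2 * q"
    using q by simp
  moreover have "q / 2 * q > 0" using q by simp
  ultimately show ?thesis by linarith
qed

lemma tent_scale: assumes T: "T > 0"
  shows "integrable lborel (\<lambda>t. tent p q (t / T))"
    "(\<integral>t. tent p q (t / T) \<partial>lborel) = T * (\<integral>u. tent p q u \<partial>lborel)"
proof -
  have "integrable lborel (\<lambda>x. tent p q (0 + (1 / T) * x))"
    using T by (intro lborel_integrable_real_affine tent_int) auto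
  then show "integrable lborel (\<lambda>t. tent p q (t / T))" by simp
  have "(\<integral>t. tent p q (t / T) \<partial>lborel) = \<bar>T\<bar> *\<^sub>R (\<integral>x. tent p q ((0 + T * x) / T) \<partial>lborel)"
    using T by (intro lborel_integral_real_affine) auto
  then show "(\<integral>t. tent p q (t / T) \<partial>lborel) = T * (\<integral>u. tent p q u \<partial>lborel)"
    using T by simp
qed

locale karamata =
  fixes m :: "real \<Rightarrow> real" and G :: "real \<Rightarrow> real" and \<rho> c :: real
  assumes m_mono: "mono m" and m_nonneg: "\<And>t. 0 \<le> m t"
    and LT_int: "\<And>s. s > 0 \<Longrightarrow> integrable lborel (\<lambda>t. indicator {0..} t * exp (- (s * t)) * m t)"
    and LT_eq: "\<And>s. s > 0 \<Longrightarrow> (\<integral>t. indicator {0..} t * exp (- (s * t)) * m t \<partial>lborel) = G s"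
    and lim: "((\<lambda>s. s powr (1 + \<rho>) * G s) \<longlongrightarrow> c) (at_right 0)"
    and rho: "\<rho> > 0" and c: "c > 0"
begin

definition J :: "(real \<Rightarrow> real) \<Rightarrow> real \<Rightarrow> real" where
  "J f T = (\<integral>t. indicator {0..} t * f (t / T) * m t \<partial>lborel) / T powr (1 + \<rho>)"

definition Lam :: "(real \<Rightarrow> real) \<Rightarrow> real" where
  "Lam f = c / Gamma (1 + \<rho>) * (\<integral>u. indicator {0..} u * f u * u powr \<rho> \<partial>lborel)"

lemma m_meas[measurable]: "m \<in> borel_measurable borel"
  by (rule borel_measurable_mono[OF m_mono])

lemma Gpos: "Gamma (1 + \<rho>) > 0" using rho by (intro Gamma_real_pos) auto

lemma Lam_exp: assumes k: "k > 0" shows "Lam (\<lambda>u. exp (- (k * u))) = c / k powr (1 + \<rho>)"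
  using gamma_int[OF rho k] Gpos by (simp add: Lam_def mult.assoc)

lemma int_exp: assumes k: "k > 0"
  shows "integrable lborel (\<lambda>u. indicator {0..} u * exp (- (k * u)) * u powr \<rho>)"
  using gamma_int[OF rho k] by (simp add: mult.assoc)

lemma J_exp_eq: assumes k: "k > 0" and T: "T > 0"
  shows "J (\<lambda>u. exp (- (k * u))) T = G (k / T) / T powr (1 + \<rho>)"
proof -
  have "(\<integral>t. indicator {0..} t * exp (- (k * (t / T))) * m t \<partial>lborel) = G (k / T)"
    using LT_eq[of "k / T"] k T by (simp add: field_simps)
  then show ?thesis by (simp add: J_def)
qed

lemma J_exp_int: assumes k: "k > 0" and T: "T > 0"
  shows "integrable lborel (\<lambda>t. indicator {0..} t * exp (- (k * (t / T))) * m t)"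
  using LT_int[of "k / T"] k T by (simp add: field_simps)

lemma J_exp_lim: assumes k: "k > 0"
  shows "((\<lambda>T. J (\<lambda>u. exp (- (k * u))) T) \<longlongrightarrow> c / k powr (1 + \<rho>)) at_top"
proof -
  have f: "filterlim (\<lambda>T. k / T) (at_right 0) at_top"
    unfolding filterlim_at
  proof
    show "\<forall>\<^sub>F x in at_top. k / x \<in> {0<..} \<and> k / x \<noteq> 0"
      using eventually_gt_at_top[of 0] by eventually_elim (use k in auto)
    show "((\<lambda>T. k / T) \<longlongrightarrow> 0) at_top"
      by (intro tendsto_divide_0[OF tendsto_const] filterlim_at_top_imp_at_infinity filterlim_ident)
  qed
  have "((\<lambda>T. (k / T) powr (1 + \<rho>) * G (k / T) / k powr (1 + \<rho>)) \<longlongrightarrow> c / k powr (1 + \<rho>)) at_top"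
    by (intro tendsto_divide tendsto_const filterlim_compose[OF lim f]) (use k in auto)
  moreover have "\<forall>\<^sub>F T in at_top. (k / T) powr (1 + \<rho>) * G (k / T) / k powr (1 + \<rho>) = J (\<lambda>u. exp (- (k * u))) T"
    using eventually_gt_at_top[of 0]
    by eventually_elim (use k in \<open>simp add: J_exp_eq powr_divide\<close>)
  ultimately show ?thesis by (rule Lim_transform_eventually)
qed

lemma J_sum:
  fixes a :: "nat \<Rightarrow> real" and n :: nat
  shows "((\<lambda>T. J (\<lambda>u. \<Sum>i\<le>n. a i * exp (- (real (Suc i) * u))) T)
           \<longlongrightarrow> Lam (\<lambda>u. \<Sum>i\<le>n. a i * exp (- (real (Suc i) * u)))) at_top"
proof -
  have L: "Lam (\<lambda>u. \<Sum>i\<le>n. a i * exp (- (real (Suc i) * u)))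
        = (\<Sum>i\<le>n. a i * Lam (\<lambda>u. exp (- (real (Suc i) * u))))"
  proof -
    have "(\<integral>u. indicator {0..} u * (\<Sum>i\<le>n. a i * exp (- (real (Suc i) * u))) * u powr \<rho> \<partial>lborel)
        = (\<integral>u. (\<Sum>i\<le>n. a i * (indicator {0..} u * exp (- (real (Suc i) * u)) * u powr \<rho>)) \<partial>lborel)"
      by (intro Bochner_Integration.integral_cong refl) (simp add: sum_distrib_left sum_distrib_right mult_ac)
    also have "\<dots> = (\<Sum>i\<le>n. a i * (\<integral>u. indicator {0..} u * exp (- (real (Suc i) * u)) * u powr \<rho> \<partial>lborel))"
    proof (subst Bochner_Integration.integral_sum)
      fix i assume "i \<in> {..n}"
      show "integrable lborel (\<lambda>u. a i * (indicator {0..} u * exp (- (real (Suc i) * u)) * u powr \<rho>))"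
        by (intro integrable_mult_right int_exp) simp
    qed simp
    finally show ?thesis unfolding Lam_def by (simp add: sum_distrib_left mult_ac)
  qed
  have JJ: "J (\<lambda>u. \<Sum>i\<le>n. a i * exp (- (real (Suc i) * u))) T
        = (\<Sum>i\<le>n. a i * J (\<lambda>u. exp (- (real (Suc i) * u))) T)" if T: "T > 0" for T
  proof -
    have "(\<integral>t. indicator {0..} t * (\<Sum>i\<le>n. a i * exp (- (real (Suc i) * (t / T)))) * m t \<partial>lborel)
        = (\<integral>t. (\<Sum>i\<le>n. a i * (indicator {0..} t * exp (- (real (Suc i) * (t / T))) * m t)) \<partial>lborel)"
      by (intro Bochner_Integration.integral_cong refl) (simp add: sum_distrib_left sum_distrib_right mult_ac)
    also have "\<dots> = (\<Sum>i\<le>n. a i * (\<integral>t. indicator {0..} t * exp (- (real (Suc i) * (t / T))) * m t \<partial>lborel))"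
    proof (subst Bochner_Integration.integral_sum)
      fix i assume "i \<in> {..n}"
      show "integrable lborel (\<lambda>t. a i * (indicator {0..} t * exp (- (real (Suc i) * (t / T))) * m t))"
        by (intro integrable_mult_right J_exp_int T) simp
    qed simp
    finally show ?thesis unfolding J_def by (simp add: sum_distrib_left sum_divide_distrib mult_ac)
  qed
  have "((\<lambda>T. \<Sum>i\<le>n. a i * J (\<lambda>u. exp (- (real (Suc i) * u))) T)
         \<longlongrightarrow> (\<Sum>i\<le>n. a i * Lam (\<lambda>u. exp (- (real (Suc i) * u))))) at_top"
    by (intro tendsto_sum tendsto_mult tendsto_const) (simp add: Lam_exp J_exp_lim del: of_nat_Suc)
  moreover have "\<forall>\<^sub>F T in at_top. (\<Sum>i\<le>n. a i * J (\<lambda>u. exp (- (real (Suc i) * u))) T)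
        = J (\<lambda>u. \<Sum>i\<le>n. a i * exp (- (real (Suc i) * u))) T"
    using eventually_gt_at_top[of 0] by eventually_elim (rule JJ[symmetric])
  ultimately show ?thesis unfolding L by (rule Lim_transform_eventually)
qed

lemma w_bound:
  fixes w :: "real \<Rightarrow> real" and a b :: real
  assumes cont: "continuous_on UNIV w" and supp: "\<And>u. u \<le> a \<or> b \<le> u \<Longrightarrow> w u = 0"
  obtains B where "B \<ge> 0" "\<And>u. u \<ge> 0 \<Longrightarrow> \<bar>w u\<bar> \<le> B * exp b * exp (- u)"
proof -
  have "bounded (w ` {a..b})"
    by (intro compact_imp_bounded compact_continuous_image continuous_on_subset[OF cont]) auto
  then obtain B0 where B0: "\<And>x. x \<in> {a..b} \<Longrightarrow> \<bar>w x\<bar> \<le> B0"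
    unfolding bounded_iff by (metis atLeastAtMost_iff image_eqI real_norm_def)
  define B where "B = max B0 0"
  have "\<bar>w u\<bar> \<le> B * exp b * exp (- u)" if "u \<ge> 0" for u
  proof (cases "a < u \<and> u < b")
    case True
    then have "\<bar>w u\<bar> \<le> B" using B0[of u] by (auto simp: B_def)
    also have "\<dots> \<le> B * exp (b - u)"
    proof -
      have "exp (b - u) \<ge> 1" using True by simp
      moreover have "B \<ge> 0" by (simp add: B_def)
      ultimately have "0 \<le> B * (exp (b - u) - 1)" by simp
      then show ?thesis by (simp add: algebra_simps)
    qed
    finally show ?thesis by (simp add: exp_diff exp_minus field_simps)
  next
    case False
    then have "w u = 0" using supp by auto
    then show ?thesis by (auto simp: B_def)
  qed
  then show ?thesis using that[of B] by (auto simp: B_def)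
qed

lemma J_int_w:
  fixes w :: "real \<Rightarrow> real" and a b :: real
  assumes cont: "continuous_on UNIV w" and supp: "\<And>u. u \<le> a \<or> b \<le> u \<Longrightarrow> w u = 0" and T: "T > 0"
  shows "integrable lborel (\<lambda>t. indicator {0..} t * w (t / T) * m t)"
proof -
  obtain B where B: "B \<ge> 0" "\<And>u. u \<ge> 0 \<Longrightarrow> \<bar>w u\<bar> \<le> B * exp b * exp (- u)"
    using w_bound[OF cont supp] by blast
  have wm[measurable]: "w \<in> borel_measurable borel" using cont by (rule borel_measurable_continuous_onI)
  show ?thesis
  proof (rule Bochner_Integration.integrable_bound)
    show "integrable lborel (\<lambda>t. B * exp b * (indicator {0..} t * exp (- (1 * (t / T))) * m t))"
      by (intro integrable_mult_right J_exp_int T) simp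
    show "(\<lambda>t. indicator {0..} t * w (t / T) * m t) \<in> borel_measurable lborel" by measurable
    show "AE t in lborel. norm (indicator {0..} t * w (t / T) * m t)
        \<le> norm (B * exp b * (indicator {0..} t * exp (- (1 * (t / T))) * m t))"
    proof (intro AE_I2)
      fix t :: real
      show "norm (indicator {0..} t * w (t / T) * m t)
        \<le> norm (B * exp b * (indicator {0..} t * exp (- (1 * (t / T))) * m t))"
      proof (cases "t \<ge> 0")
        case True
        then have "\<bar>w (t / T)\<bar> \<le> B * exp b * exp (- (t / T))" using T by (intro B(2)) auto
        then have "\<bar>w (t / T)\<bar> * m t \<le> B * exp b * exp (- (t / T)) * m t"
          using m_nonneg by (intro mult_right_mono) auto
        then show ?thesis using True B m_nonneg by (simp add: abs_mult)
      qed simp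
    qed
  qed
qed

lemma Lam_int_w:
  fixes w :: "real \<Rightarrow> real" and a b :: real
  assumes cont: "continuous_on UNIV w" and supp: "\<And>u. u \<le> a \<or> b \<le> u \<Longrightarrow> w u = 0"
  shows "integrable lborel (\<lambda>u. indicator {0..} u * w u * u powr \<rho>)"
proof -
  obtain B where B: "B \<ge> 0" "\<And>u. u \<ge> 0 \<Longrightarrow> \<bar>w u\<bar> \<le> B * exp b * exp (- u)"
    using w_bound[OF cont supp] by blast
  have wm[measurable]: "w \<in> borel_measurable borel" using cont by (rule borel_measurable_continuous_onI)
  show ?thesis
  proof (rule Bochner_Integration.integrable_bound)
    show "integrable lborel (\<lambda>u. B * exp b * (indicator {0..} u * exp (- (1 * u)) * u powr \<rho>))"
      by (intro integrable_mult_right int_exp) simp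
    show "(\<lambda>u. indicator {0..} u * w u * u powr \<rho>) \<in> borel_measurable lborel" by measurable
    show "AE u in lborel. norm (indicator {0..} u * w u * u powr \<rho>)
        \<le> norm (B * exp b * (indicator {0..} u * exp (- (1 * u)) * u powr \<rho>))"
    proof (intro AE_I2)
      fix u :: real
      show "norm (indicator {0..} u * w u * u powr \<rho>)
        \<le> norm (B * exp b * (indicator {0..} u * exp (- (1 * u)) * u powr \<rho>))"
      proof (cases "u \<ge> 0")
        case True
        then have "\<bar>w u\<bar> * u powr \<rho> \<le> B * exp b * exp (- u) * u powr \<rho>"
          using B(2)[OF True] by (intro mult_right_mono) auto
        then show ?thesis using True B by (simp add: abs_mult)
      qed simp
    qed
  qed
qed

lemma J_w_lim:
  fixes w :: "real \<Rightarrow> real" and a b :: real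
  assumes cont: "continuous_on UNIV w" and ab: "0 < a" "a \<le> b"
    and supp: "\<And>u. u \<le> a \<or> b \<le> u \<Longrightarrow> w u = 0"
  shows "((\<lambda>T. J w T) \<longlongrightarrow> Lam w) at_top"
proof (rule tendstoI)
  fix \<epsilon> :: real assume \<epsilon>: "\<epsilon> > 0"
  define \<eta> where "\<eta> = \<epsilon> / (2 * c + 3)"
  have \<eta>: "\<eta> > 0" using \<epsilon> c by (simp add: \<eta>_def)
  define h where "h x = (if x \<le> 0 then 0 else w (- ln x) / x)" for x :: real
  have hcont: "continuous_on {0..1} h"
  proof -
    have eb: "0 < exp (- b)" "exp (- b) \<le> 1" using ab by auto
    have "{0..1} = {0..exp (- b)} \<union> {exp (- b)..(1::real)}" using eb by (auto; linarith)
    moreover have "continuous_on {0..exp (- b)} h"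
    proof (rule continuous_on_eq[OF continuous_on_const[of _ 0]])
      fix x assume x: "x \<in> {0..exp (- b)}"
      show "0 = h x"
      proof (cases "x \<le> 0")
        case False
        then have "ln x \<le> - b" using x False ln_le_cancel_iff[of x "exp (- b)"] by simp
        then have "w (- ln x) = 0" using supp by auto
        then show ?thesis by (simp add: h_def)
      qed (simp add: h_def)
    qed
    moreover have "continuous_on {exp (- b)..1} h"
    proof (rule continuous_on_eq[of _ "\<lambda>x. w (- ln x) / x"])
      fix x assume "x \<in> {exp (- b)..1}"
      then have "x > 0" by (metis atLeastAtMost_iff exp_gt_zero less_le_trans)
      then show "w (- ln x) / x = h x" by (simp add: h_def)
    next
      have "continuous_on {exp (- b)..1} (\<lambda>x. w (- ln x))"
        by (rule continuous_on_compose2[OF cont]) (use eb in \<open>auto intro!: continuous_intros\<close>)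
      then show "continuous_on {exp (- b)..1} (\<lambda>x. w (- ln x) / x)"
        using eb by (auto intro!: continuous_intros)
    qed
    ultimately show ?thesis by (metis closed_atLeastAtMost continuous_on_closed_Un)
  qed
  obtain g where g: "real_polynomial_function g" "\<And>x. x \<in> {0..1} \<Longrightarrow> \<bar>h x - g x\<bar> < \<eta>"
    using Stone_Weierstrass_real_polynomial_function[OF compact_Icc hcont \<eta>] by blast
  obtain aa n where gs: "g = (\<lambda>x. \<Sum>i\<le>n. aa i * x ^ i)"
    using g(1) real_polynomial_function_iff_sum by blast
  define K where "K u = (\<Sum>i\<le>n. aa i * exp (- (real (Suc i) * u)))" for u
  have Kw: "\<bar>w u - K u\<bar> \<le> \<eta> * exp (- u)" if u: "u \<ge> 0" for u
  proof -
    define x where "x = exp (- u)"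
    have x: "0 < x" "x \<le> 1" using u by (auto simp: x_def)
    have hx: "h x = w u / x" using x by (simp add: h_def x_def)
    have ex: "exp (- (real (Suc i) * u)) = x * x ^ i" for i
    proof -
      have "exp (- (real (Suc i) * u)) = exp (real (Suc i) * (- u))" by simp
      also have "\<dots> = exp (- u) ^ Suc i" by (rule exp_of_nat_mult)
      finally show ?thesis by (simp add: x_def)
    qed
    have Kx: "K u = x * g x" unfolding K_def gs ex by (simp add: sum_distrib_left mult_ac)
    have "\<bar>w u - K u\<bar> = x * \<bar>h x - g x\<bar>" using x by (simp add: hx Kx abs_mult field_simps)
    also have "\<dots> \<le> x * \<eta>" using g(2)[of x] x by (intro mult_left_mono) auto
    finally show ?thesis by (simp add: x_def mult_ac)
  qed
  have intK: "integrable lborel (\<lambda>t. indicator {0..} t * K (t / T) * m t)" if T: "T > 0" for T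
  proof -
    have "integrable lborel (\<lambda>t. \<Sum>i\<le>n. aa i * (indicator {0..} t * exp (- (real (Suc i) * (t / T))) * m t))"
      by (intro Bochner_Integration.integrable_sum integrable_mult_right J_exp_int T) simp
    then show ?thesis unfolding K_def by (simp add: sum_distrib_left sum_distrib_right mult_ac)
  qed
  have intKL: "integrable lborel (\<lambda>u. indicator {0..} u * K u * u powr \<rho>)"
  proof -
    have "integrable lborel (\<lambda>u. \<Sum>i\<le>n. aa i * (indicator {0..} u * exp (- (real (Suc i) * u)) * u powr \<rho>))"
      by (intro Bochner_Integration.integrable_sum integrable_mult_right int_exp) simp
    then show ?thesis unfolding K_def by (simp add: sum_distrib_left sum_distrib_right mult_ac)
  qed
  have intw: "integrable lborel (\<lambda>t. indicator {0..} t * w (t / T) * m t)" if "T > 0" for T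
    using J_int_w[OF cont supp that] .
  have intwL: "integrable lborel (\<lambda>u. indicator {0..} u * w u * u powr \<rho>)"
    using Lam_int_w[OF cont supp] .
  have E1: "\<forall>\<^sub>F T in at_top. J (\<lambda>u. exp (- (1 * u))) T < c + 1"
    using J_exp_lim[of 1] by (intro order_tendstoD) auto
  have E2: "\<forall>\<^sub>F T in at_top. dist (J K T) (Lam K) < \<eta>"
    using J_sum[of aa n] \<eta> unfolding K_def[abs_def] by (intro tendstoD) auto
  have C: "\<bar>Lam K - Lam w\<bar> \<le> c * \<eta>"
  proof -
    have "(\<integral>u. indicator {0..} u * (K u - w u) * u powr \<rho> \<partial>lborel)
        = (\<integral>u. indicator {0..} u * K u * u powr \<rho> - indicator {0..} u * w u * u powr \<rho> \<partial>lborel)"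
      by (simp add: algebra_simps)
    also have "\<dots> = (\<integral>u. indicator {0..} u * K u * u powr \<rho> \<partial>lborel) - (\<integral>u. indicator {0..} u * w u * u powr \<rho> \<partial>lborel)"
      by (rule Bochner_Integration.integral_diff[OF intKL intwL])
    finally have "Lam K - Lam w = c / Gamma (1 + \<rho>) * (\<integral>u. indicator {0..} u * (K u - w u) * u powr \<rho> \<partial>lborel)"
      unfolding Lam_def by (simp add: right_diff_distrib)
    moreover have "\<bar>\<integral>u. indicator {0..} u * (K u - w u) * u powr \<rho> \<partial>lborel\<bar>
        \<le> (\<integral>u. \<eta> * (indicator {0..} u * exp (- (1 * u)) * u powr \<rho>) \<partial>lborel)"
    proof (rule integral_abs_bound_integral)
      show "integrable lborel (\<lambda>u. indicator {0..} u * (K u - w u) * u powr \<rho>)"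
        using intKL intwL by (simp add: algebra_simps)
      show "integrable lborel (\<lambda>u. \<eta> * (indicator {0..} u * exp (- (1 * u)) * u powr \<rho>))"
        by (intro integrable_mult_right int_exp) simp
      fix u :: real
      show "\<bar>indicator {0..} u * (K u - w u) * u powr \<rho>\<bar> \<le> \<eta> * (indicator {0..} u * exp (- (1 * u)) * u powr \<rho>)"
      proof (cases "u \<ge> 0")
        case True
        have "\<bar>K u - w u\<bar> * u powr \<rho> \<le> \<eta> * exp (- u) * u powr \<rho>"
          using Kw[OF True] by (intro mult_right_mono) (auto simp: abs_minus_commute)
        then show ?thesis using True by (simp add: abs_mult mult_ac)
      qed simp
    qed
    moreover have "(\<integral>u. \<eta> * (indicator {0..} u * exp (- (1 * u)) * u powr \<rho>) \<partial>lborel) = \<eta> * Gamma (1 + \<rho>)"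
      using gamma_int[OF rho, of 1] by (simp add: mult.assoc)
    ultimately have I1: "\<bar>\<integral>u. indicator {0..} u * (K u - w u) * u powr \<rho> \<partial>lborel\<bar> \<le> \<eta> * Gamma (1 + \<rho>)"
      by linarith
    have "\<bar>Lam K - Lam w\<bar> = c / Gamma (1 + \<rho>) * \<bar>\<integral>u. indicator {0..} u * (K u - w u) * u powr \<rho> \<partial>lborel\<bar>"
      using \<open>Lam K - Lam w = _\<close> c Gpos by (simp add: abs_mult)
    also have "\<dots> \<le> c / Gamma (1 + \<rho>) * (\<eta> * Gamma (1 + \<rho>))"
      using c Gpos I1 by (intro mult_left_mono) auto
    finally show ?thesis using Gpos by simp
  qed
  have D: "\<bar>J w T - J K T\<bar> \<le> \<eta> * J (\<lambda>u. exp (- (1 * u))) T" if T: "T > 0" for T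
  proof -
    have "(\<integral>t. indicator {0..} t * (w (t / T) - K (t / T)) * m t \<partial>lborel)
        = (\<integral>t. indicator {0..} t * w (t / T) * m t - indicator {0..} t * K (t / T) * m t \<partial>lborel)"
      by (simp add: algebra_simps)
    also have "\<dots> = (\<integral>t. indicator {0..} t * w (t / T) * m t \<partial>lborel) - (\<integral>t. indicator {0..} t * K (t / T) * m t \<partial>lborel)"
      by (rule Bochner_Integration.integral_diff[OF intw[OF T] intK[OF T]])
    finally have "J w T - J K T = (\<integral>t. indicator {0..} t * (w (t / T) - K (t / T)) * m t \<partial>lborel) / T powr (1 + \<rho>)"
      unfolding J_def by (simp add: diff_divide_distrib)
    moreover have "\<bar>\<integral>t. indicator {0..} t * (w (t / T) - K (t / T)) * m t \<partial>lborel\<bar>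
        \<le> (\<integral>t. \<eta> * (indicator {0..} t * exp (- (1 * (t / T))) * m t) \<partial>lborel)"
    proof (rule integral_abs_bound_integral)
      show "integrable lborel (\<lambda>t. indicator {0..} t * (w (t / T) - K (t / T)) * m t)"
        using intK[OF T] intw[OF T] by (simp add: algebra_simps)
      show "integrable lborel (\<lambda>t. \<eta> * (indicator {0..} t * exp (- (1 * (t / T))) * m t))"
        by (intro integrable_mult_right J_exp_int T) simp
      fix t :: real
      show "\<bar>indicator {0..} t * (w (t / T) - K (t / T)) * m t\<bar> \<le> \<eta> * (indicator {0..} t * exp (- (1 * (t / T))) * m t)"
      proof (cases "t \<ge> 0")
        case True
        have "\<bar>w (t / T) - K (t / T)\<bar> * m t \<le> \<eta> * exp (- (t / T)) * m t"
          using Kw[of "t / T"] True T m_nonneg by (intro mult_right_mono) auto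
        then show ?thesis using True m_nonneg by (simp add: abs_mult mult_ac)
      qed simp
    qed
    ultimately show ?thesis using T \<eta>
      by (simp add: J_def abs_divide divide_right_mono)
  qed
  show "\<forall>\<^sub>F T in at_top. dist (J w T) (Lam w) < \<epsilon>"
    using E1 E2 eventually_gt_at_top[of 0]
  proof eventually_elim
    case (elim T)
    have "dist (J w T) (Lam w) \<le> \<bar>J w T - J K T\<bar> + \<bar>J K T - Lam K\<bar> + \<bar>Lam K - Lam w\<bar>"
      by (simp add: dist_real_def)
    also have "\<dots> < \<eta> * (c + 1) + \<eta> + c * \<eta>"
    proof -
      have "\<bar>J w T - J K T\<bar> \<le> \<eta> * (c + 1)"
        using D[of T] elim \<eta> by (smt (verit) mult_left_mono)
      moreover have "\<bar>J K T - Lam K\<bar> < \<eta>" using elim by (simp add: dist_real_def)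
      ultimately show ?thesis using C by linarith
    qed
    also have "\<dots> = \<eta> * (2 * c + 2)" by (simp add: algebra_simps)
    also have "\<dots> < \<eta> * (2 * c + 3)" using \<eta> by simp
    also have "\<dots> = \<epsilon>" using c by (simp add: \<eta>_def)
    finally show ?case .
  qed
qed

lemma upper:
  assumes d: "0 < \<delta>"
  defines "w \<equiv> tent (1 + \<delta>/2) (\<delta>/2)"
  shows "\<forall>\<^sub>F T in at_top. m T / T powr \<rho> \<le> J w T / (\<integral>u. w u \<partial>lborel)"
    "Lam w / (\<integral>u. w u \<partial>lborel) \<le> c / Gamma (1 + \<rho>) * (1 + \<delta>) powr \<rho>"
    "((\<lambda>T. J w T / (\<integral>u. w u \<partial>lborel)) \<longlongrightarrow> Lam w / (\<integral>u. w u \<partial>lborel)) at_top"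
proof -
  define W where "W = (\<integral>u. w u \<partial>lborel)"
  have W: "W > 0" unfolding W_def w_def using d by (intro tent_pos) auto
  have supp: "\<And>u. u \<le> 1 \<or> 1 + \<delta> \<le> u \<Longrightarrow> w u = 0"
    unfolding w_def by (rule tent_supp) auto
  have wnn: "\<And>u. w u \<ge> 0" unfolding w_def by (rule tent_nonneg)
  have cont: "continuous_on UNIV w" unfolding w_def by (rule tent_cont)
  have lim: "((\<lambda>T. J w T) \<longlongrightarrow> Lam w) at_top"
    by (rule J_w_lim[OF cont _ _ supp]) (use d in auto)
  then show "((\<lambda>T. J w T / (\<integral>u. w u \<partial>lborel)) \<longlongrightarrow> Lam w / (\<integral>u. w u \<partial>lborel)) at_top"
    by (intro tendsto_divide tendsto_const) (use W W_def in auto)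
  show "\<forall>\<^sub>F T in at_top. m T / T powr \<rho> \<le> J w T / (\<integral>u. w u \<partial>lborel)"
    using eventually_gt_at_top[of 0]
  proof eventually_elim
    case (elim T)
    have ws: "integrable lborel (\<lambda>t. w (t / T))" "(\<integral>t. w (t / T) \<partial>lborel) = T * W"
      using tent_scale[OF elim] by (simp_all add: w_def W_def)
    have "m T * (T * W) = (\<integral>t. m T * w (t / T) \<partial>lborel)" using ws by simp
    also have "\<dots> \<le> (\<integral>t. indicator {0..} t * w (t / T) * m t \<partial>lborel)"
    proof (rule integral_mono)
      show "integrable lborel (\<lambda>t. m T * w (t / T))" using ws by simp
      show "integrable lborel (\<lambda>t. indicator {0..} t * w (t / T) * m t)"
        by (rule J_int_w[OF cont supp elim])
      fix t
      show "m T * w (t / T) \<le> indicator {0..} t * w (t / T) * m t"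
      proof (cases "w (t / T) = 0")
        case False
        then have "\<not> (t / T \<le> 1 \<or> 1 + \<delta> \<le> t / T)" using supp by blast
        then have "t / T > 1" by simp
        then have "t > T" using elim by (simp add: field_simps)
        then have "m T \<le> m t" using m_mono by (auto simp: mono_def)
        then show ?thesis using \<open>t > T\<close> elim wnn[of "t / T"] by (simp add: mult_right_mono mult.commute)
      qed simp
    qed
    finally have "m T * (T * W) \<le> J w T * T powr (1 + \<rho>)"
      using elim by (simp add: J_def)
    also have "\<dots> = J w T * (T * T powr \<rho>)" using elim by (simp add: powr_add)
    finally have "(m T * W) * T \<le> (J w T * T powr \<rho>) * T"
      by (simp add: mult_ac)
    then have "m T * W \<le> J w T * T powr \<rho>" using elim by simp
    then have "(m T / T powr \<rho>) * W \<le> J w T" using elim by (simp add: divide_simps mult_ac)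
    then show ?case using W by (simp add: W_def field_simps)
  qed
  have "Lam w \<le> c / Gamma (1 + \<rho>) * ((1 + \<delta>) powr \<rho> * W)"
  proof -
    have "(\<integral>u. indicator {0..} u * w u * u powr \<rho> \<partial>lborel) \<le> (\<integral>u. (1 + \<delta>) powr \<rho> * w u \<partial>lborel)"
    proof (rule integral_mono)
      show "integrable lborel (\<lambda>u. indicator {0..} u * w u * u powr \<rho>)" by (rule Lam_int_w[OF cont supp])
      show "integrable lborel (\<lambda>u. (1 + \<delta>) powr \<rho> * w u)" using tent_int by (simp add: w_def)
      fix u
      show "indicator {0..} u * w u * u powr \<rho> \<le> (1 + \<delta>) powr \<rho> * w u"
      proof (cases "w u = 0")
        case False
        then have "\<not> (u \<le> 1 \<or> 1 + \<delta> \<le> u)" using supp by blast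
        then have u: "1 < u" "u < 1 + \<delta>" by simp_all
        then have "u powr \<rho> \<le> (1 + \<delta>) powr \<rho>" using rho by (intro powr_mono2) auto
        then show ?thesis using u wnn[of u] by (simp add: mult_left_mono mult.commute)
      qed simp
    qed
    also have "\<dots> = (1 + \<delta>) powr \<rho> * W" by (simp add: W_def)
    finally show ?thesis unfolding Lam_def using c Gpos by (intro mult_left_mono) auto
  qed
  then show "Lam w / (\<integral>u. w u \<partial>lborel) \<le> c / Gamma (1 + \<rho>) * (1 + \<delta>) powr \<rho>"
    using W by (simp add: W_def[symmetric] field_simps)
qed

lemma lower:
  assumes d: "0 < \<delta>" "\<delta> < 1"
  defines "w \<equiv> tent (1 - \<delta>/2) (\<delta>/2)"
  shows "\<forall>\<^sub>F T in at_top. J w T / (\<integral>u. w u \<partial>lborel) \<le> m T / T powr \<rho>"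
    "c / Gamma (1 + \<rho>) * (1 - \<delta>) powr \<rho> \<le> Lam w / (\<integral>u. w u \<partial>lborel)"
    "((\<lambda>T. J w T / (\<integral>u. w u \<partial>lborel)) \<longlongrightarrow> Lam w / (\<integral>u. w u \<partial>lborel)) at_top"
proof -
  define W where "W = (\<integral>u. w u \<partial>lborel)"
  have W: "W > 0" unfolding W_def w_def using d by (intro tent_pos) auto
  have supp: "\<And>u. u \<le> 1 - \<delta> \<or> 1 \<le> u \<Longrightarrow> w u = 0"
    unfolding w_def by (rule tent_supp) auto
  have wnn: "\<And>u. w u \<ge> 0" unfolding w_def by (rule tent_nonneg)
  have cont: "continuous_on UNIV w" unfolding w_def by (rule tent_cont)
  have lim: "((\<lambda>T. J w T) \<longlongrightarrow> Lam w) at_top"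
    by (rule J_w_lim[OF cont _ _ supp]) (use d in auto)
  then show "((\<lambda>T. J w T / (\<integral>u. w u \<partial>lborel)) \<longlongrightarrow> Lam w / (\<integral>u. w u \<partial>lborel)) at_top"
    by (intro tendsto_divide tendsto_const) (use W W_def in auto)
  show "\<forall>\<^sub>F T in at_top. J w T / (\<integral>u. w u \<partial>lborel) \<le> m T / T powr \<rho>"
    using eventually_gt_at_top[of 0]
  proof eventually_elim
    case (elim T)
    have ws: "integrable lborel (\<lambda>t. w (t / T))" "(\<integral>t. w (t / T) \<partial>lborel) = T * W"
      using tent_scale[OF elim] by (simp_all add: w_def W_def)
    have "(\<integral>t. indicator {0..} t * w (t / T) * m t \<partial>lborel) \<le> (\<integral>t. m T * w (t / T) \<partial>lborel)"
    proof (rule integral_mono)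
      show "integrable lborel (\<lambda>t. m T * w (t / T))" using ws by simp
      show "integrable lborel (\<lambda>t. indicator {0..} t * w (t / T) * m t)"
        by (rule J_int_w[OF cont supp elim])
      fix t
      show "indicator {0..} t * w (t / T) * m t \<le> m T * w (t / T)"
      proof (cases "w (t / T) = 0")
        case False
        then have "\<not> (t / T \<le> 1 - \<delta> \<or> 1 \<le> t / T)" using supp by blast
        then have "t / T < 1" "t / T > 1 - \<delta>" by simp_all
        then have "t / T > 0" using d by linarith
        then have "t > 0" using elim by (simp add: zero_less_divide_iff)
        have "t < T" using \<open>t / T < 1\<close> elim by (simp add: divide_less_eq)
        then have "m t \<le> m T" using m_mono by (auto simp: mono_def)
        then have "m t * w (t / T) \<le> m T * w (t / T)" using wnn[of "t / T"] by (rule mult_right_mono)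
        then show ?thesis using \<open>t > 0\<close> by (simp add: mult.commute)
      qed simp
    qed
    also have "\<dots> = m T * (T * W)" using ws by simp
    finally have "J w T * T powr (1 + \<rho>) \<le> m T * (T * W)"
      using elim by (simp add: J_def)
    also have "J w T * T powr (1 + \<rho>) = (J w T * T powr \<rho>) * T" using elim by (simp add: powr_add mult_ac)
    finally have "(J w T * T powr \<rho>) * T \<le> (m T * W) * T"
      by (simp add: mult_ac)
    then have "J w T * T powr \<rho> \<le> m T * W" using elim by simp
    then have "J w T \<le> (m T / T powr \<rho>) * W" using elim by (simp add: divide_simps mult_ac)
    then show ?case using W by (simp add: W_def field_simps)
  qed
  have "c / Gamma (1 + \<rho>) * ((1 - \<delta>) powr \<rho> * W) \<le> Lam w"
  proof -
    have "(1 - \<delta>) powr \<rho> * W = (\<integral>u. (1 - \<delta>) powr \<rho> * w u \<partial>lborel)" by (simp add: W_def)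
    also have "\<dots> \<le> (\<integral>u. indicator {0..} u * w u * u powr \<rho> \<partial>lborel)"
    proof (rule integral_mono)
      show "integrable lborel (\<lambda>u. indicator {0..} u * w u * u powr \<rho>)" by (rule Lam_int_w[OF cont supp])
      show "integrable lborel (\<lambda>u. (1 - \<delta>) powr \<rho> * w u)" using tent_int by (simp add: w_def)
      fix u
      show "(1 - \<delta>) powr \<rho> * w u \<le> indicator {0..} u * w u * u powr \<rho>"
      proof (cases "w u = 0")
        case False
        then have "\<not> (u \<le> 1 - \<delta> \<or> 1 \<le> u)" using supp by blast
        then have u: "1 - \<delta> < u" "u < 1" by simp_all
        then have "(1 - \<delta>) powr \<rho> \<le> u powr \<rho>" using rho d by (intro powr_mono2) auto
        then show ?thesis using u d wnn[of u] by (simp add: mult_left_mono mult.commute)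
      qed simp
    qed
    finally show ?thesis unfolding Lam_def using c Gpos by (intro mult_left_mono) auto
  qed
  then show "c / Gamma (1 + \<rho>) * (1 - \<delta>) powr \<rho> \<le> Lam w / (\<integral>u. w u \<partial>lborel)"
    using W by (simp add: W_def[symmetric] field_simps)
qed

theorem karamata_lim: "((\<lambda>T. m T / T powr \<rho>) \<longlongrightarrow> c / Gamma (1 + \<rho>)) at_top"
proof (rule order_tendstoI)
  define L where "L = c / Gamma (1 + \<rho>)"
  fix y assume y: "y > c / Gamma (1 + \<rho>)"
  have "((\<lambda>\<delta>. L * (1 + \<delta>) powr \<rho>) \<longlongrightarrow> L * (1 + 0) powr \<rho>) (at_right 0)"
    by (intro tendsto_intros) auto
  then have "\<forall>\<^sub>F \<delta> in at_right 0. L * (1 + \<delta>) powr \<rho> < y"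
    using y by (intro order_tendstoD) (auto simp: L_def)
  then obtain b where b: "b > 0" "\<And>\<delta>. \<delta> > 0 \<Longrightarrow> \<delta> < b \<Longrightarrow> L * (1 + \<delta>) powr \<rho> < y"
    unfolding eventually_at_right_field by auto
  define \<delta> where "\<delta> = b / 2"
  have d: "\<delta> > 0" "L * (1 + \<delta>) powr \<rho> < y" using b by (auto simp: \<delta>_def)
  note U = upper[OF d(1)]
  have "\<forall>\<^sub>F T in at_top. J (tent (1 + \<delta>/2) (\<delta>/2)) T / (\<integral>u. tent (1 + \<delta>/2) (\<delta>/2) u \<partial>lborel) < y"
    using U(2) d(2) unfolding L_def by (intro order_tendstoD[OF U(3)]) auto
  with U(1) show "\<forall>\<^sub>F T in at_top. m T / T powr \<rho> < y"
    by eventually_elim auto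
next
  define L where "L = c / Gamma (1 + \<rho>)"
  fix y assume y: "y < c / Gamma (1 + \<rho>)"
  have "((\<lambda>\<delta>. L * (1 - \<delta>) powr \<rho>) \<longlongrightarrow> L * (1 - 0) powr \<rho>) (at_right 0)"
    by (intro tendsto_intros) auto
  then have "\<forall>\<^sub>F \<delta> in at_right 0. y < L * (1 - \<delta>) powr \<rho>"
    using y by (intro order_tendstoD) (auto simp: L_def)
  then obtain b where b: "b > 0" "\<And>\<delta>. \<delta> > 0 \<Longrightarrow> \<delta> < b \<Longrightarrow> y < L * (1 - \<delta>) powr \<rho>"
    unfolding eventually_at_right_field by auto
  define \<delta> where "\<delta> = min b 1 / 2"
  have d: "\<delta> > 0" "\<delta> < 1" "y < L * (1 - \<delta>) powr \<rho>" using b by (auto simp: \<delta>_def)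
  note U = lower[OF d(1,2)]
  have "\<forall>\<^sub>F T in at_top. y < J (tent (1 - \<delta>/2) (\<delta>/2)) T / (\<integral>u. tent (1 - \<delta>/2) (\<delta>/2) u \<partial>lborel)"
    using U(2) d(3) unfolding L_def by (intro order_tendstoD[OF U(3)]) auto
  with U(1) show "\<forall>\<^sub>F T in at_top. y < m T / T powr \<rho>"
    by eventually_elim auto
qed

end


definition D :: "nat \<Rightarrow> nat \<Rightarrow> real" where "D i j = real i / real (Suc j)"

lemma D_nonneg: "D i j \<ge> 0" by (simp add: D_def)

lemma D_dense: assumes "0 \<le> u" "u < a" shows "\<exists>i j. u < D i j \<and> D i j < a"
proof -
  obtain j where j: "inverse (real (Suc j)) < a - u" using assms reals_Archimedean[of "a - u"] by auto
  define i where "i = nat \<lfloor>u * real (Suc j)\<rfloor> + 1"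
  have "real i > u * real (Suc j)" unfolding i_def using assms by linarith
  then have 1: "u < D i j" by (simp add: D_def field_simps)
  have "0 \<le> u * real (Suc j)" using assms by simp
  then have "real (nat \<lfloor>u * real (Suc j)\<rfloor>) = real_of_int \<lfloor>u * real (Suc j)\<rfloor>" by simp
  then have "real i \<le> u * real (Suc j) + 1" unfolding i_def using of_int_floor_le[of "u * real (Suc j)"] by simp
  then have "D i j \<le> (u * real (Suc j) + 1) / real (Suc j)" unfolding D_def by (intro divide_right_mono) auto
  also have "\<dots> = u + inverse (real (Suc j))" by (simp add: field_simps)
  finally have "D i j \<le> u + inverse (real (Suc j))" .
  with j have "D i j < a" by linarith
  with 1 show ?thesis by blast
qed


lemma exp_tail:
  fixes s b :: real assumes s: "s > 0"
  shows "(\<integral>\<^sup>+t. ennreal (exp (- (s * t))) * indicator {b..} t \<partial>lborel) = ennreal (exp (- (s * b)) / s)"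
proof -
  have "((\<lambda>x::real. exp (-s*x)) has_integral exp (-s*b)/s) {b..}"
    by (rule has_integral_exp_minus_to_infinity[OF s])
  from nn_integral_has_integral_lebesgue'[OF _ this]
  show ?thesis by simp
qed

lemma pow_exp:
  fixes a :: real and k :: nat assumes a: "a > 0"
  shows "(\<integral>\<^sup>+x. ennreal (x ^ k * exp (- (a * x))) * indicator {0..} x \<partial>lborel) = ennreal (fact k / a ^ Suc k)"
proof -
  have meas: "(\<lambda>x. ennreal (x ^ k * exp (- (a * x))) * indicator {0..} x) \<in> borel_measurable borel"
    by measurable
  have "(\<integral>\<^sup>+x. ennreal (x ^ k * exp (- (a * x))) * indicator {0..} x \<partial>lborel)
      = ennreal \<bar>1 / a\<bar> * (\<integral>\<^sup>+x. ennreal ((0 + 1 / a * x) ^ k * exp (- (a * (0 + 1 / a * x)))) * indicator {0..} (0 + 1 / a * x) \<partial>lborel)"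
    using nn_integral_real_affine[OF meas, of "1 / a" 0] a by simp
  also have "(\<integral>\<^sup>+x. ennreal ((0 + 1 / a * x) ^ k * exp (- (a * (0 + 1 / a * x)))) * indicator {0..} (0 + 1 / a * x) \<partial>lborel)
      = (\<integral>\<^sup>+x. ennreal (1 / a ^ k) * (ennreal (x ^ k * exp (- x)) * indicator {0..} x) \<partial>lborel)"
    using a by (intro nn_integral_cong) (auto simp: indicator_def zero_le_mult_iff ennreal_mult'[symmetric] power_divide field_simps)
  also have "\<dots> = ennreal (1 / a ^ k) * real_of_nat (fact k)"
    by (subst nn_integral_cmult) (auto simp: nn_intergal_power_times_exp_Ici)
  finally show ?thesis using a
    by (simp add: ennreal_mult'[symmetric] ennreal_of_nat_eq_real_of_nat field_simps)
qed

lemma pow_int: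
  fixes y :: real and k :: nat assumes y: "y \<ge> 0"
  shows "(\<integral>\<^sup>+x. ennreal (if 0 \<le> x \<and> x < y then real (Suc k) * x ^ k else 0) \<partial>lborel) = ennreal (y ^ Suc k)"
proof -
  have int: "integrable lborel (\<lambda>x. (real (Suc k) * x ^ k) * indicator {0..y} x)"
    by (intro borel_integrable_atLeastAtMost) auto
  have "(\<integral>\<^sup>+x. ennreal (if 0 \<le> x \<and> x < y then real (Suc k) * x ^ k else 0) \<partial>lborel)
      = (\<integral>\<^sup>+x. ennreal ((real (Suc k) * x ^ k) * indicator {0..y} x) \<partial>lborel)"
    by (intro nn_integral_cong_AE) (use AE_lborel_singleton[of y] in \<open>eventually_elim, auto simp: indicator_def\<close>)
  also have "\<dots> = ennreal (\<integral>x. (real (Suc k) * x ^ k) * indicator {0..y} x \<partial>lborel)"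
    by (intro nn_integral_eq_integral int AE_I2) (auto simp: indicator_def)
  also have "(\<integral>x. (real (Suc k) * x ^ k) * indicator {0..y} x \<partial>lborel) = real (Suc k) * (\<integral>x. x ^ k * indicator {0..y} x \<partial>lborel)"
    by (simp add: mult.assoc)
  also have "\<dots> = y ^ Suc k"
    using y by (subst integral_power) (auto simp del: of_nat_Suc)
  finally show ?thesis .
qed

locale msub = prob_space M for M :: "'a measure" +
  fixes L :: "real \<Rightarrow> 'a \<Rightarrow> real" and \<phi> :: "real \<Rightarrow> real"
  assumes Lmeas: "\<And>t. t \<ge> 0 \<Longrightarrow> L t \<in> borel_measurable M"
    and L0: "\<And>\<omega>. \<omega> \<in> space M \<Longrightarrow> L 0 \<omega> = 0"
    and Lmono: "\<And>\<omega>. \<omega> \<in> space M \<Longrightarrow> mono_on {0..} (\<lambda>t. L t \<omega>)"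
    and Llap: "\<And>t u. 0 \<le> t \<Longrightarrow> 0 \<le> u \<Longrightarrow> expectation (\<lambda>\<omega>. exp (- u * L t \<omega>)) = exp (- t * \<phi> u)"
    and phipos: "\<And>u. u > 0 \<Longrightarrow> \<phi> u > 0"
begin

lemma LmeasD[measurable]: "L (D i j) \<in> borel_measurable M"
  using Lmeas D_nonneg by auto

lemma Lmeas_nat[measurable]: "L (real k) \<in> borel_measurable M"
  using Lmeas by auto

lemma Lmono': "\<omega> \<in> space M \<Longrightarrow> 0 \<le> x \<Longrightarrow> x \<le> y \<Longrightarrow> L x \<omega> \<le> L y \<omega>"
  using Lmono by (auto simp: mono_on_def)

lemma Lnonneg: "\<omega> \<in> space M \<Longrightarrow> 0 \<le> x \<Longrightarrow> 0 \<le> L x \<omega>"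
  using Lmono'[of \<omega> 0 x] L0 by auto

definition S :: "real \<Rightarrow> 'a \<Rightarrow> real set" where
  "S t \<omega> = {u. 0 \<le> u \<and> t < L u \<omega>}"

definition Y :: "real \<Rightarrow> 'a \<Rightarrow> real" where
  "Y t \<omega> = Inf (S t \<omega>)"

definition Gs :: "'a set" where
  "Gs = {\<omega> \<in> space M. \<forall>n::nat. \<exists>k::nat. real n < L (real k) \<omega>}"

definition Y' :: "real \<Rightarrow> 'a \<Rightarrow> real" where
  "Y' t \<omega> = (if \<omega> \<in> Gs then Y t \<omega> else 0)"

definition Q :: "real \<Rightarrow> real \<Rightarrow> 'a \<Rightarrow> bool" where
  "Q a t \<omega> \<longleftrightarrow> (\<exists>i j. D i j < a \<and> t < L (D i j) \<omega>)"

lemma Gs_sets[measurable]: "Gs \<in> sets M"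
  unfolding Gs_def by measurable

lemma S_bdd: "bdd_below (S t \<omega>)"
  unfolding S_def by (auto intro: bdd_belowI[of _ 0])

lemma S_ne_Gs: assumes "\<omega> \<in> Gs" shows "S t \<omega> \<noteq> {}"
proof -
  obtain n :: nat where n: "max t 0 \<le> real n" using real_arch_simple by blast
  obtain k :: nat where "real n < L (real k) \<omega>" using assms unfolding Gs_def by blast
  then have "real k \<in> S t \<omega>" using n by (auto simp: S_def)
  then show ?thesis by blast
qed

lemma S_ne_iff: assumes "\<omega> \<in> space M" shows "S t \<omega> \<noteq> {} \<longleftrightarrow> (\<exists>i j. t < L (D i j) \<omega>)"
proof
  assume "S t \<omega> \<noteq> {}"
  then obtain u where u: "0 \<le> u" "t < L u \<omega>" by (auto simp: S_def)
  obtain i j where "u < D i j" using D_dense[OF u(1), of "u + 1"] by auto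
  then have "L u \<omega> \<le> L (D i j) \<omega>" using Lmono'[OF assms u(1)] by auto
  then show "\<exists>i j. t < L (D i j) \<omega>" using u by (intro exI[of _ i] exI[of _ j]) auto
next
  assume "\<exists>i j. t < L (D i j) \<omega>"
  then show "S t \<omega> \<noteq> {}" using D_nonneg by (auto simp: S_def)
qed

lemma Y_less_iff: assumes "\<omega> \<in> space M" "S t \<omega> \<noteq> {}"
  shows "Y t \<omega> < a \<longleftrightarrow> Q a t \<omega>"
proof
  assume "Y t \<omega> < a"
  then obtain u where u: "u \<in> S t \<omega>" "u < a"
    using cInf_less_iff[OF assms(2) S_bdd] by (auto simp: Y_def)
  then have u': "0 \<le> u" "t < L u \<omega>" by (auto simp: S_def)
  obtain i j where ij: "u < D i j" "D i j < a" using D_dense[OF u'(1) u(2)] by auto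
  then have "L u \<omega> \<le> L (D i j) \<omega>" using Lmono'[OF assms(1) u'(1)] by auto
  then show "Q a t \<omega>" using u' ij unfolding Q_def by (intro exI[of _ i] exI[of _ j]) auto
next
  assume "Q a t \<omega>"
  then obtain i j where ij: "D i j < a" "t < L (D i j) \<omega>" by (auto simp: Q_def)
  then have "D i j \<in> S t \<omega>" using D_nonneg by (auto simp: S_def)
  then have "Y t \<omega> \<le> D i j" unfolding Y_def by (intro cInf_lower S_bdd)
  then show "Y t \<omega> < a" using ij by linarith
qed

lemma Y'_nonneg: "0 \<le> Y' t \<omega>"
proof (cases "\<omega> \<in> Gs")
  case True
  then show ?thesis unfolding Y'_def Y_def using S_ne_Gs[OF True]
    by (auto intro!: cInf_greatest simp: S_def)
qed (simp add: Y'_def)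

lemma Y'_upper: assumes "\<omega> \<in> space M" "0 \<le> x" "x < Y' t \<omega>" shows "L x \<omega> \<le> t"
proof (rule ccontr)
  assume "\<not> L x \<omega> \<le> t"
  then have "x \<in> S t \<omega>" using assms by (auto simp: S_def)
  then have "Y t \<omega> \<le> x" unfolding Y_def by (intro cInf_lower S_bdd)
  then show False using assms by (auto simp: Y'_def split: if_splits)
qed

lemma Y'_lower: assumes "\<omega> \<in> Gs" "0 \<le> x" "0 < \<eta>" "L (x + \<eta>) \<omega> \<le> t" shows "x < Y' t \<omega>"
proof -
  have sp: "\<omega> \<in> space M" using assms by (auto simp: Gs_def)
  have "x + \<eta> \<le> Y t \<omega>" unfolding Y_def
  proof (rule cInf_greatest[OF S_ne_Gs[OF assms(1)]])
    fix u assume "u \<in> S t \<omega>"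
    then have u: "0 \<le> u" "t < L u \<omega>" by (auto simp: S_def)
    show "x + \<eta> \<le> u"
    proof (rule ccontr)
      assume "\<not> x + \<eta> \<le> u"
      then have "L u \<omega> \<le> L (x + \<eta>) \<omega>" using Lmono'[OF sp u(1)] by auto
      then show False using u assms by linarith
    qed
  qed
  then show ?thesis using assms by (simp add: Y'_def)
qed

lemma Y'_mono: assumes "t \<le> t'" shows "Y' t \<omega> \<le> Y' t' \<omega>"
proof (cases "\<omega> \<in> Gs")
  case True
  have "S t' \<omega> \<subseteq> S t \<omega>" using assms by (auto simp: S_def)
  then show ?thesis unfolding Y'_def Y_def using True S_ne_Gs[OF True] S_bdd
    by (auto intro!: cInf_superset_mono)
qed (simp add: Y'_def)

lemma Y'_joint[measurable]: "(\<lambda>p. Y' (fst p) (snd p)) \<in> borel_measurable (lborel \<Otimes>\<^sub>M M)"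
proof (subst borel_measurable_iff_less, intro allI)
  fix a :: real
  have "{p \<in> space (lborel \<Otimes>\<^sub>M M). Y' (fst p) (snd p) < a}
     = {p \<in> space (lborel \<Otimes>\<^sub>M M). (snd p \<in> Gs \<and> (\<exists>i j. D i j < a \<and> fst p < L (D i j) (snd p)))
          \<or> (snd p \<notin> Gs \<and> 0 < a)}"
  proof (intro Collect_cong conj_cong refl)
    fix p :: "real \<times> 'a" assume p: "p \<in> space (lborel \<Otimes>\<^sub>M M)"
    then have sp: "snd p \<in> space M" by (auto simp: space_pair_measure)
    show "(Y' (fst p) (snd p) < a) = ((snd p \<in> Gs \<and> (\<exists>i j. D i j < a \<and> fst p < L (D i j) (snd p))) \<or> (snd p \<notin> Gs \<and> 0 < a))"
      using Y_less_iff[OF sp S_ne_Gs] by (auto simp: Y'_def Q_def)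
  qed
  also have "\<dots> \<in> sets (lborel \<Otimes>\<^sub>M M)" by measurable
  finally show "{p \<in> space (lborel \<Otimes>\<^sub>M M). Y' (fst p) (snd p) < a} \<in> sets (lborel \<Otimes>\<^sub>M M)" .
qed

lemma Y'_meas[measurable]: "Y' t \<in> borel_measurable M"
proof -
  have "(\<lambda>\<omega>. Y' (fst (t, \<omega>)) (snd (t, \<omega>))) \<in> borel_measurable M"
    by measurable
  then show ?thesis by simp
qed

lemma Y_meas: "Y t \<in> borel_measurable M"
proof (subst borel_measurable_iff_less, intro allI)
  fix a :: real
  have "{\<omega> \<in> space M. Y t \<omega> < a}
     = {\<omega> \<in> space M. ((\<exists>i j. t < L (D i j) \<omega>) \<and> (\<exists>i j. D i j < a \<and> t < L (D i j) \<omega>))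
          \<or> (\<not> (\<exists>i j. t < L (D i j) \<omega>) \<and> Inf {} < a)}"
  proof (intro Collect_cong conj_cong refl)
    fix \<omega> assume sp: "\<omega> \<in> space M"
    show "(Y t \<omega> < a) = (((\<exists>i j. t < L (D i j) \<omega>) \<and> (\<exists>i j. D i j < a \<and> t < L (D i j) \<omega>))
          \<or> (\<not> (\<exists>i j. t < L (D i j) \<omega>) \<and> Inf {} < a))"
    proof (cases "S t \<omega> = {}")
      case True
      then show ?thesis using S_ne_iff[OF sp, of t] by (simp add: Y_def)
    next
      case False
      then show ?thesis using S_ne_iff[OF sp, of t] Y_less_iff[OF sp False] by (auto simp: Q_def)
    qed
  qed
  also have "\<dots> \<in> sets M" by measurable
  finally show "{\<omega> \<in> space M. Y t \<omega> < a} \<in> sets M" .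
qed


lemma lap_nn: assumes "0 \<le> x" "0 \<le> u"
  shows "(\<integral>\<^sup>+\<omega>. ennreal (exp (- u * L x \<omega>)) \<partial>M) = ennreal (exp (- x * \<phi> u))"
proof -
  have int: "integrable M (\<lambda>\<omega>. exp (- u * L x \<omega>))"
  proof (rule Bochner_Integration.integrable_bound[of _ "\<lambda>_. 1::real"])
    show "integrable M (\<lambda>_. 1::real)" by simp
    show "(\<lambda>\<omega>. exp (- u * L x \<omega>)) \<in> borel_measurable M" using Lmeas[OF assms(1)] by measurable
    show "AE \<omega> in M. norm (exp (- u * L x \<omega>)) \<le> norm (1::real)"
      using Lnonneg assms by (intro AE_I2) (auto simp: mult_nonneg_nonneg)
  qed
  show ?thesis using Llap[OF assms] by (subst nn_integral_eq_integral[OF int]) auto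
qed

lemma chernoff: assumes "0 \<le> x"
  shows "emeasure M {\<omega> \<in> space M. L x \<omega> \<le> t} \<le> ennreal (exp t * exp (- x * \<phi> 1))"
proof -
  have "emeasure M {\<omega> \<in> space M. L x \<omega> \<le> t} = (\<integral>\<^sup>+\<omega>. indicator {\<omega> \<in> space M. L x \<omega> \<le> t} \<omega> \<partial>M)"
    using Lmeas[OF assms] by (intro nn_integral_indicator[symmetric]) measurable
  also have "\<dots> \<le> (\<integral>\<^sup>+\<omega>. ennreal (exp t) * ennreal (exp (- 1 * L x \<omega>)) \<partial>M)"
  proof (intro nn_integral_mono)
    fix \<omega> assume "\<omega> \<in> space M"
    show "indicator {\<omega> \<in> space M. L x \<omega> \<le> t} \<omega> \<le> ennreal (exp t) * ennreal (exp (- 1 * L x \<omega>))"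
    proof (cases "L x \<omega> \<le> t")
      case True
      then have "1 \<le> exp t * exp (- 1 * L x \<omega>)" by (simp add: exp_minus field_simps)
      then show ?thesis by (simp add: ennreal_mult'[symmetric] indicator_def)
    qed (simp add: indicator_def)
  qed
  also have "\<dots> = ennreal (exp t) * ennreal (exp (- x * \<phi> 1))"
  proof -
    have l1: "(\<integral>\<^sup>+\<omega>. ennreal (exp (- L x \<omega>)) \<partial>M) = ennreal (exp (- (x * \<phi> 1)))"
      using lap_nn[OF assms, of 1] by simp
    show ?thesis using Lmeas[OF assms] by (subst nn_integral_cmult) (auto simp: l1)
  qed
  finally show ?thesis by (simp add: ennreal_mult'[symmetric])
qed

lemma Gs_AE: "AE \<omega> in M. \<omega> \<in> Gs"
proof -
  define N where "N n = {\<omega> \<in> space M. \<forall>k::nat. L (real k) \<omega> \<le> real n}" for n :: nat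
  have Nn: "N n \<in> null_sets M" for n
  proof -
    have Ns: "N n \<in> sets M" unfolding N_def by measurable
    have bnd: "measure M (N n) \<le> exp (real n) * exp (- real k * \<phi> 1)" for k :: nat
    proof -
      have "emeasure M (N n) \<le> emeasure M {\<omega> \<in> space M. L (real k) \<omega> \<le> real n}"
        by (intro emeasure_mono) (auto simp: N_def)
      also have "\<dots> \<le> ennreal (exp (real n) * exp (- real k * \<phi> 1))" by (rule chernoff) simp
      finally show ?thesis by (simp add: emeasure_eq_measure measure_nonneg)
    qed
    have lim: "(\<lambda>k::nat. exp (real n) * exp (- real k * \<phi> 1)) \<longlonglongrightarrow> exp (real n) * 0"
    proof (intro tendsto_mult tendsto_const)
      have p: "\<phi> 1 > 0" by (rule phipos) simp
      have "filterlim (\<lambda>k::nat. real k * \<phi> 1) at_top sequentially"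
        by (rule filterlim_at_top_mult_tendsto_pos[OF tendsto_const p filterlim_real_sequentially])
      then have "filterlim (\<lambda>k::nat. - (real k * \<phi> 1)) at_bot sequentially"
        by (simp add: filterlim_uminus_at_top)
      then show "(\<lambda>k::nat. exp (- real k * \<phi> 1)) \<longlonglongrightarrow> 0"
        using filterlim_compose[OF exp_at_bot] by (simp add: o_def)
    qed
    have "measure M (N n) \<le> exp (real n) * 0"
    proof (rule tendsto_lowerbound[OF lim])
      show "\<forall>\<^sub>F k in sequentially. measure M (N n) \<le> exp (real n) * exp (- real k * \<phi> 1)"
        using bnd by (intro always_eventually allI)
    qed simp
    then have "measure M (N n) = 0" using measure_nonneg[of M "N n"] by linarith
    then show ?thesis using Ns by (simp add: null_sets_def emeasure_eq_measure)
  qed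
  show ?thesis
  proof (rule AE_I')
    show "(\<Union>n. N n) \<in> null_sets M" using Nn by blast
    show "{\<omega> \<in> space M. \<omega> \<notin> Gs} \<subseteq> (\<Union>n. N n)"
      by (auto simp: Gs_def N_def not_less)
  qed
qed


lemma PS: "pair_sigma_finite lborel M"
  by (intro pair_sigma_finite.intro lborel.sigma_finite_measure_axioms) unfold_locales

lemma cdf_lap: assumes x: "0 \<le> x" and s: "0 < s"
  shows "(\<integral>\<^sup>+t. ennreal (indicator {0..} t * exp (- (s * t))) * emeasure M {\<omega> \<in> space M. L x \<omega> \<le> t} \<partial>lborel)
     = ennreal (exp (- x * \<phi> s) / s)"
proof -
  interpret P: pair_sigma_finite lborel M by (rule PS)
  note [measurable] = Lmeas[OF x]
  have "(\<integral>\<^sup>+t. ennreal (indicator {0..} t * exp (- (s * t))) * emeasure M {\<omega> \<in> space M. L x \<omega> \<le> t} \<partial>lborel)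
     = (\<integral>\<^sup>+t. (\<integral>\<^sup>+\<omega>. ennreal (if L x \<omega> \<le> t then indicator {0..} t * exp (- (s * t)) else 0) \<partial>M) \<partial>lborel)"
  proof (intro nn_integral_cong)
    fix t :: real
    have "emeasure M {\<omega> \<in> space M. L x \<omega> \<le> t} = (\<integral>\<^sup>+\<omega>. indicator {\<omega> \<in> space M. L x \<omega> \<le> t} \<omega> \<partial>M)"
      by (intro nn_integral_indicator[symmetric]) measurable
    then have "ennreal (indicator {0..} t * exp (- (s * t))) * emeasure M {\<omega> \<in> space M. L x \<omega> \<le> t}
        = (\<integral>\<^sup>+\<omega>. ennreal (indicator {0..} t * exp (- (s * t))) * indicator {\<omega> \<in> space M. L x \<omega> \<le> t} \<omega> \<partial>M)"
      by (simp add: nn_integral_cmult)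
    also have "\<dots> = (\<integral>\<^sup>+\<omega>. ennreal (if L x \<omega> \<le> t then indicator {0..} t * exp (- (s * t)) else 0) \<partial>M)"
      by (intro nn_integral_cong) (auto simp: indicator_def)
    finally show "ennreal (indicator {0..} t * exp (- (s * t))) * emeasure M {\<omega> \<in> space M. L x \<omega> \<le> t}
        = (\<integral>\<^sup>+\<omega>. ennreal (if L x \<omega> \<le> t then indicator {0..} t * exp (- (s * t)) else 0) \<partial>M)" .
  qed
  also have "\<dots> = (\<integral>\<^sup>+\<omega>. (\<integral>\<^sup>+t. ennreal (if L x \<omega> \<le> t then indicator {0..} t * exp (- (s * t)) else 0) \<partial>lborel) \<partial>M)"
    by (intro P.Fubini'[symmetric]) measurable
  also have "\<dots> = (\<integral>\<^sup>+\<omega>. ennreal (1 / s) * ennreal (exp (- s * L x \<omega>)) \<partial>M)"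
  proof (intro nn_integral_cong)
    fix \<omega> assume \<omega>: "\<omega> \<in> space M"
    have "(\<integral>\<^sup>+t. ennreal (if L x \<omega> \<le> t then indicator {0..} t * exp (- (s * t)) else 0) \<partial>lborel)
        = (\<integral>\<^sup>+t. ennreal (exp (- (s * t))) * indicator {L x \<omega>..} t \<partial>lborel)"
      using Lnonneg[OF \<omega> x] by (intro nn_integral_cong) (auto simp: indicator_def)
    also have "\<dots> = ennreal (exp (- (s * L x \<omega>)) / s)" by (rule exp_tail[OF s])
    finally show "(\<integral>\<^sup>+t. ennreal (if L x \<omega> \<le> t then indicator {0..} t * exp (- (s * t)) else 0) \<partial>lborel)
        = ennreal (1 / s) * ennreal (exp (- s * L x \<omega>))"
      using s by (simp add: ennreal_mult'[symmetric])
  qed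
  also have "\<dots> = ennreal (1 / s) * ennreal (exp (- x * \<phi> s))"
    using lap_nn[OF x, of s] s by (subst nn_integral_cmult) auto
  finally show ?thesis using s by (simp add: ennreal_mult'[symmetric])
qed

lemma P_upper: assumes "0 \<le> x"
  shows "emeasure M {\<omega> \<in> space M. x < Y' t \<omega>} \<le> emeasure M {\<omega> \<in> space M. L x \<omega> \<le> t}"
  using Y'_upper assms Lmeas[OF assms] by (intro emeasure_mono) auto

lemma P_lower: assumes "0 \<le> x" "0 < \<eta>"
  shows "emeasure M {\<omega> \<in> space M. L (x + \<eta>) \<omega> \<le> t} \<le> emeasure M {\<omega> \<in> space M. x < Y' t \<omega>}"
proof (rule emeasure_mono_AE)
  show "AE \<omega> in M. \<omega> \<in> {\<omega> \<in> space M. L (x + \<eta>) \<omega> \<le> t} \<longrightarrow> \<omega> \<in> {\<omega> \<in> space M. x < Y' t \<omega>}"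
    using Gs_AE by eventually_elim (use Y'_lower assms in auto)
  show "{\<omega> \<in> space M. x < Y' t \<omega>} \<in> sets M" by measurable
qed

lemma m_formula:
  "(\<integral>\<^sup>+\<omega>. ennreal (Y' t \<omega> ^ Suc k) \<partial>M)
     = (\<integral>\<^sup>+x. ennreal (real (Suc k) * x ^ k) * indicator {0..} x * emeasure M {\<omega> \<in> space M. x < Y' t \<omega>} \<partial>lborel)"
proof -
  interpret P: pair_sigma_finite lborel M by (rule PS)
  have "(\<integral>\<^sup>+\<omega>. ennreal (Y' t \<omega> ^ Suc k) \<partial>M)
     = (\<integral>\<^sup>+\<omega>. (\<integral>\<^sup>+x. ennreal (if 0 \<le> x \<and> x < Y' t \<omega> then real (Suc k) * x ^ k else 0) \<partial>lborel) \<partial>M)"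
    using Y'_nonneg by (intro nn_integral_cong) (simp add: pow_int)
  also have "\<dots> = (\<integral>\<^sup>+x. (\<integral>\<^sup>+\<omega>. ennreal (if 0 \<le> x \<and> x < Y' t \<omega> then real (Suc k) * x ^ k else 0) \<partial>M) \<partial>lborel)"
    by (intro P.Fubini') measurable
  also have "\<dots> = (\<integral>\<^sup>+x. ennreal (real (Suc k) * x ^ k) * indicator {0..} x * emeasure M {\<omega> \<in> space M. x < Y' t \<omega>} \<partial>lborel)"
  proof (intro nn_integral_cong)
    fix x :: real
    have "emeasure M {\<omega> \<in> space M. x < Y' t \<omega>} = (\<integral>\<^sup>+\<omega>. indicator {\<omega> \<in> space M. x < Y' t \<omega>} \<omega> \<partial>M)"
      by (intro nn_integral_indicator[symmetric]) measurable
    then have "ennreal (real (Suc k) * x ^ k) * indicator {0..} x * emeasure M {\<omega> \<in> space M. x < Y' t \<omega>}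
       = (\<integral>\<^sup>+\<omega>. ennreal (real (Suc k) * x ^ k) * indicator {0..} x * indicator {\<omega> \<in> space M. x < Y' t \<omega>} \<omega> \<partial>M)"
      by (simp add: nn_integral_cmult)
    also have "\<dots> = (\<integral>\<^sup>+\<omega>. ennreal (if 0 \<le> x \<and> x < Y' t \<omega> then real (Suc k) * x ^ k else 0) \<partial>M)"
      by (intro nn_integral_cong) (auto simp: indicator_def)
    finally show "(\<integral>\<^sup>+\<omega>. ennreal (if 0 \<le> x \<and> x < Y' t \<omega> then real (Suc k) * x ^ k else 0) \<partial>M)
        = ennreal (real (Suc k) * x ^ k) * indicator {0..} x * emeasure M {\<omega> \<in> space M. x < Y' t \<omega>}" ..
  qed
  finally show ?thesis .
qed


lemma E_meas[measurable]:
  assumes [measurable]: "f \<in> borel_measurable N" "g \<in> borel_measurable N"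
  shows "(\<lambda>p. emeasure M {\<omega> \<in> space M. f p < Y' (g p) \<omega>}) \<in> borel_measurable N"
proof -
  have [measurable]: "(\<lambda>q. (g (fst q), snd q)) \<in> measurable (N \<Otimes>\<^sub>M M) (lborel \<Otimes>\<^sub>M M)"
    by measurable
  have [measurable]: "(\<lambda>q. Y' (g (fst q)) (snd q)) \<in> borel_measurable (N \<Otimes>\<^sub>M M)"
    using measurable_compose[OF _ Y'_joint, of "\<lambda>q. (g (fst q), snd q)"] by simp
  define Qs where "Qs = {q \<in> space (N \<Otimes>\<^sub>M M). f (fst q) < Y' (g (fst q)) (snd q)}"
  have "Qs \<in> sets (N \<Otimes>\<^sub>M M)" unfolding Qs_def by measurable
  from measurable_emeasure_Pair[OF this]
  have "(\<lambda>p. emeasure M (Pair p -` Qs)) \<in> borel_measurable N" .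
  moreover have "p \<in> space N \<Longrightarrow> Pair p -` Qs = {\<omega> \<in> space M. f p < Y' (g p) \<omega>}" for p
    by (auto simp: Qs_def space_pair_measure)
  ultimately show ?thesis by (subst measurable_cong[where g="\<lambda>p. emeasure M (Pair p -` Qs)"]) auto
qed

definition mk :: "nat \<Rightarrow> real \<Rightarrow> ennreal" where
  "mk k t = (\<integral>\<^sup>+\<omega>. ennreal (Y' t \<omega> ^ Suc k) \<partial>M)"

definition Ik :: "real \<Rightarrow> real \<Rightarrow> ennreal" where
  "Ik s x = (\<integral>\<^sup>+t. ennreal (indicator {0..} t * exp (- (s * t))) * emeasure M {\<omega> \<in> space M. x < Y' t \<omega>} \<partial>lborel)"

lemma LT_Ik:
  "(\<integral>\<^sup>+t. ennreal (indicator {0..} t * exp (- (s * t))) * mk k t \<partial>lborel)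
    = (\<integral>\<^sup>+x. ennreal (real (Suc k) * x ^ k) * indicator {0..} x * Ik s x \<partial>lborel)"
proof -
  have "(\<integral>\<^sup>+t. ennreal (indicator {0..} t * exp (- (s * t))) * mk k t \<partial>lborel)
     = (\<integral>\<^sup>+t. (\<integral>\<^sup>+x. ennreal (indicator {0..} t * exp (- (s * t))) * (ennreal (real (Suc k) * x ^ k) * indicator {0..} x * emeasure M {\<omega> \<in> space M. x < Y' t \<omega>}) \<partial>lborel) \<partial>lborel)"
    unfolding mk_def m_formula by (intro nn_integral_cong) (simp add: nn_integral_cmult)
  also have "\<dots> = (\<integral>\<^sup>+x. (\<integral>\<^sup>+t. ennreal (indicator {0..} t * exp (- (s * t))) * (ennreal (real (Suc k) * x ^ k) * indicator {0..} x * emeasure M {\<omega> \<in> space M. x < Y' t \<omega>}) \<partial>lborel) \<partial>lborel)"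
    by (intro lborel_pair.Fubini') measurable
  also have "\<dots> = (\<integral>\<^sup>+x. ennreal (real (Suc k) * x ^ k) * indicator {0..} x * Ik s x \<partial>lborel)"
    unfolding Ik_def by (intro nn_integral_cong) (simp add: nn_integral_cmult[symmetric] mult_ac)
  finally show ?thesis .
qed


lemma Ik_upper: assumes "0 \<le> x" "0 < s" shows "Ik s x \<le> ennreal (exp (- x * \<phi> s) / s)"
proof -
  have "Ik s x \<le> (\<integral>\<^sup>+t. ennreal (indicator {0..} t * exp (- (s * t))) * emeasure M {\<omega> \<in> space M. L x \<omega> \<le> t} \<partial>lborel)"
    unfolding Ik_def by (intro nn_integral_mono mult_left_mono P_upper assms) auto
  also have "\<dots> = ennreal (exp (- x * \<phi> s) / s)" by (rule cdf_lap[OF assms])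
  finally show ?thesis .
qed

lemma Ik_lower: assumes "0 \<le> x" "0 < s" "0 < \<eta>" shows "ennreal (exp (- (x + \<eta>) * \<phi> s) / s) \<le> Ik s x"
proof -
  have "ennreal (exp (- (x + \<eta>) * \<phi> s) / s) = (\<integral>\<^sup>+t. ennreal (indicator {0..} t * exp (- (s * t))) * emeasure M {\<omega> \<in> space M. L (x + \<eta>) \<omega> \<le> t} \<partial>lborel)"
    using assms by (intro cdf_lap[symmetric]) auto
  also have "\<dots> \<le> Ik s x"
    unfolding Ik_def by (intro nn_integral_mono mult_left_mono P_lower assms) auto
  finally show ?thesis .
qed

definition Gk :: "nat \<Rightarrow> real \<Rightarrow> real" where
  "Gk k s = fact (Suc k) / (s * \<phi> s ^ Suc k)"

lemma Gk_pos: "0 < s \<Longrightarrow> 0 < Gk k s"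
  using phipos[of s] by (simp add: Gk_def)

lemma Ik_int: assumes s: "0 < s" and c: "0 \<le> c"
  shows "(\<integral>\<^sup>+x. ennreal (real (Suc k) * x ^ k) * indicator {0..} x * ennreal (c * exp (- x * \<phi> s) / s) \<partial>lborel)
     = ennreal (c * Gk k s)"
proof -
  have p: "\<phi> s > 0" using phipos[OF s] .
  have "(\<integral>\<^sup>+x. ennreal (real (Suc k) * x ^ k) * indicator {0..} x * ennreal (c * exp (- x * \<phi> s) / s) \<partial>lborel)
     = (\<integral>\<^sup>+x. ennreal (c * real (Suc k) / s) * (ennreal (x ^ k * exp (- (\<phi> s * x))) * indicator {0..} x) \<partial>lborel)"
    using s c by (intro nn_integral_cong) (auto simp: indicator_def ennreal_mult'[symmetric] mult_ac)
  also have "\<dots> = ennreal (c * real (Suc k) / s) * ennreal (fact k / \<phi> s ^ Suc k)"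
    by (subst nn_integral_cmult) (auto simp: pow_exp[OF p])
  also have "\<dots> = ennreal (c * Gk k s)"
    using s c p by (simp add: ennreal_mult'[symmetric] Gk_def field_simps fact_Suc)
  finally show ?thesis .
qed

lemma LT_upper: assumes s: "0 < s"
  shows "(\<integral>\<^sup>+t. ennreal (indicator {0..} t * exp (- (s * t))) * mk k t \<partial>lborel) \<le> ennreal (Gk k s)"
proof -
  have "(\<integral>\<^sup>+t. ennreal (indicator {0..} t * exp (- (s * t))) * mk k t \<partial>lborel)
     \<le> (\<integral>\<^sup>+x. ennreal (real (Suc k) * x ^ k) * indicator {0..} x * ennreal (1 * exp (- x * \<phi> s) / s) \<partial>lborel)"
    unfolding LT_Ik
  proof (intro nn_integral_mono)
    fix x :: real
    show "ennreal (real (Suc k) * x ^ k) * indicator {0..} x * Ik s x \<le> ennreal (real (Suc k) * x ^ k) * indicator {0..} x * ennreal (1 * exp (- x * \<phi> s) / s)"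
      using Ik_upper[OF _ s, of x] by (cases "0 \<le> x") (auto intro: mult_left_mono)
  qed
  also have "\<dots> = ennreal (1 * Gk k s)" by (rule Ik_int[OF s]) simp
  finally show ?thesis by simp
qed

lemma LT_lower: assumes s: "0 < s" and \<eta>: "0 < \<eta>"
  shows "ennreal (exp (- \<eta> * \<phi> s) * Gk k s) \<le> (\<integral>\<^sup>+t. ennreal (indicator {0..} t * exp (- (s * t))) * mk k t \<partial>lborel)"
proof -
  have "ennreal (exp (- \<eta> * \<phi> s) * Gk k s)
     = (\<integral>\<^sup>+x. ennreal (real (Suc k) * x ^ k) * indicator {0..} x * ennreal (exp (- \<eta> * \<phi> s) * exp (- x * \<phi> s) / s) \<partial>lborel)"
    by (rule Ik_int[OF s, symmetric]) simp
  also have "\<dots> \<le> (\<integral>\<^sup>+t. ennreal (indicator {0..} t * exp (- (s * t))) * mk k t \<partial>lborel)"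
    unfolding LT_Ik
  proof (intro nn_integral_mono)
    fix x :: real
    have e: "exp (- \<eta> * \<phi> s) * exp (- x * \<phi> s) = exp (- (x + \<eta>) * \<phi> s)"
      by (simp add: exp_add[symmetric] algebra_simps)
    show "ennreal (real (Suc k) * x ^ k) * indicator {0..} x * ennreal (exp (- \<eta> * \<phi> s) * exp (- x * \<phi> s) / s)
        \<le> ennreal (real (Suc k) * x ^ k) * indicator {0..} x * Ik s x"
      unfolding e using Ik_lower[OF _ s \<eta>, of x] by (cases "0 \<le> x") (auto intro: mult_left_mono)
  qed
  finally show ?thesis .
qed


lemma LT_eq: assumes s: "0 < s"
  shows "(\<integral>\<^sup>+t. ennreal (indicator {0..} t * exp (- (s * t))) * mk k t \<partial>lborel) = ennreal (Gk k s)"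
proof -
  define a where "a = (\<integral>\<^sup>+t. ennreal (indicator {0..} t * exp (- (s * t))) * mk k t \<partial>lborel)"
  have up: "a \<le> ennreal (Gk k s)" unfolding a_def by (rule LT_upper[OF s])
  then have "a \<noteq> \<infinity>" by (auto simp: top_unique)
  then obtain r where r: "a = ennreal r" "0 \<le> r" by (cases a) auto
  have rG: "r \<le> Gk k s" using up r Gk_pos[OF s, of k] by simp
  have low: "exp (- \<eta> * \<phi> s) * Gk k s \<le> r" if "\<eta> > 0" for \<eta>
  proof -
    have "ennreal (exp (- \<eta> * \<phi> s) * Gk k s) \<le> ennreal r"
      using LT_lower[OF s that, of k] r by (simp add: a_def)
    then show ?thesis using r by (simp add: ennreal_le_iff)
  qed
  have "Gk k s \<le> r"
  proof (rule tendsto_le[of "at_right 0" "\<lambda>_. r" r "\<lambda>\<eta>. exp (- \<eta> * \<phi> s) * Gk k s"])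
    show "((\<lambda>\<eta>. exp (- \<eta> * \<phi> s) * Gk k s) \<longlongrightarrow> Gk k s) (at_right 0)"
      by (rule tendsto_eq_intros refl | simp)+
    show "\<forall>\<^sub>F \<eta> in at_right 0. exp (- \<eta> * \<phi> s) * Gk k s \<le> r"
      using low by (auto simp: eventually_at_right_field intro: exI[of _ 1])
  qed auto
  with rG r show ?thesis by (simp add: a_def)
qed

lemma mk_finite: "mk k t < \<infinity>"
proof -
  have "mk k t \<le> (\<integral>\<^sup>+x. ennreal (real (Suc k) * x ^ k) * indicator {0..} x * ennreal (exp t * exp (- x * \<phi> 1) / 1) \<partial>lborel)"
    unfolding mk_def m_formula
  proof (intro nn_integral_mono)
    fix x :: real
    show "ennreal (real (Suc k) * x ^ k) * indicator {0..} x * emeasure M {\<omega> \<in> space M. x < Y' t \<omega>}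
        \<le> ennreal (real (Suc k) * x ^ k) * indicator {0..} x * ennreal (exp t * exp (- x * \<phi> 1) / 1)"
    proof (cases "0 \<le> x")
      case True
      have "emeasure M {\<omega> \<in> space M. x < Y' t \<omega>} \<le> ennreal (exp t * exp (- x * \<phi> 1))"
        using P_upper[OF True] chernoff[OF True] by (rule order_trans)
      then show ?thesis by (auto intro: mult_left_mono)
    qed auto
  qed
  also have "\<dots> = ennreal (exp t * Gk k 1)" by (rule Ik_int) auto
  finally show ?thesis by (auto simp: top_unique less_top[symmetric])
qed

definition Mk :: "nat \<Rightarrow> real \<Rightarrow> real" where "Mk k t = enn2real (mk k t)"

lemma mk_Mk: "mk k t = ennreal (Mk k t)"
  using mk_finite[of k t] unfolding Mk_def by (simp add: less_top)

lemma Mk_nonneg: "0 \<le> Mk k t" by (simp add: Mk_def)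

lemma Mk_mono: "mono (Mk k)"
proof (rule monoI)
  fix t t' :: real assume "t \<le> t'"
  then have "mk k t \<le> mk k t'"
    unfolding mk_def using Y'_mono Y'_nonneg
    by (intro nn_integral_mono ennreal_leI power_mono) auto
  then show "Mk k t \<le> Mk k t'" by (simp add: mk_Mk Mk_nonneg)
qed

lemma Mk_LT: assumes s: "0 < s"
  shows "integrable lborel (\<lambda>t. indicator {0..} t * exp (- (s * t)) * Mk k t)
    \<and> (\<integral>t. indicator {0..} t * exp (- (s * t)) * Mk k t \<partial>lborel) = Gk k s"
proof (rule nn_to_int)
  have [measurable]: "Mk k \<in> borel_measurable borel" by (rule borel_measurable_mono[OF Mk_mono])
  show "(\<lambda>t. indicator {0..} t * exp (- (s * t)) * Mk k t) \<in> borel_measurable lborel" by measurable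
  show "\<And>x. 0 \<le> indicator {0..} x * exp (- (s * x)) * Mk k x" by (simp add: Mk_nonneg)
  show "0 \<le> Gk k s" using Gk_pos[OF s, of k] by simp
  show "(\<integral>\<^sup>+x. ennreal (indicator {0..} x * exp (- (s * x)) * Mk k x) \<partial>lborel) = ennreal (Gk k s)"
    unfolding LT_eq[OF s, of k, symmetric] by (intro nn_integral_cong) (simp add: mk_Mk ennreal_mult' Mk_nonneg)
qed

lemma Mk_expect:
  "integrable M (\<lambda>\<omega>. Y' t \<omega> ^ Suc k) \<and> expectation (\<lambda>\<omega>. Y' t \<omega> ^ Suc k) = Mk k t"
proof
  show "integrable M (\<lambda>\<omega>. Y' t \<omega> ^ Suc k)"
    using mk_finite[of k t] Y'_nonneg unfolding mk_def by (intro integrableI_nonneg) auto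
  show "expectation (\<lambda>\<omega>. Y' t \<omega> ^ Suc k) = Mk k t"
    using Y'_nonneg unfolding Mk_def mk_def by (subst integral_eq_nn_integral) auto
qed


lemma var_eq: "variance (Y t) = Mk 1 t - (Mk 0 t)^2"
proof -
  have ae: "AE \<omega> in M. Y t \<omega> = Y' t \<omega>"
    using Gs_AE by eventually_elim (simp add: Y'_def)
  note [measurable] = Y_meas[of t]
  have e: "expectation (Y t) = expectation (Y' t)"
    by (intro integral_cong_AE ae) measurable
  have "variance (Y t) = variance (Y' t)"
    unfolding e by (intro integral_cong_AE) (use ae in \<open>measurable, eventually_elim, simp\<close>)
  also have "\<dots> = expectation (\<lambda>\<omega>. (Y' t \<omega>)\<^sup>2) - (expectation (Y' t))\<^sup>2"
    using Mk_expect[of t 0] Mk_expect[of t 1] by (intro variance_eq) (simp_all add: numeral_2_eq_2)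
  also have "\<dots> = Mk 1 t - (Mk 0 t)^2"
    using Mk_expect[of t 0] Mk_expect[of t 1] by (simp add: numeral_2_eq_2)
  finally show ?thesis .
qed

end


lemma Gk_lim:
  fixes C1 C2 a1 a2 :: real
  assumes C1: "C1 \<ge> 0" and C2: "C2 > 0" and a: "0 < a2" "a2 < a1"
  defines "\<phi> \<equiv> mixed_laplace_exponent C1 C2 a1 a2"
  shows "((\<lambda>s. s powr (1 + real (Suc k) * a2) * (fact (Suc k) / (s * \<phi> s ^ Suc k)))
           \<longlongrightarrow> fact (Suc k) / C2 ^ Suc k) (at_right 0)"
proof -
  have r0: "((\<lambda>s::real. s powr (a1 - a2)) \<longlongrightarrow> 0) (at_right 0)"
    by (rule tendsto_zero_powrI[where b = "a1 - a2"]) (use a in \<open>auto intro: tendsto_ident_at eventually_at_rightI[of 0 1]\<close>)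
  have "((\<lambda>s. fact (Suc k) * (1 / (C1 * s powr (a1 - a2) + C2)) ^ Suc k) \<longlongrightarrow> fact (Suc k) * (1 / (C1 * 0 + C2)) ^ Suc k) (at_right 0)"
    using C2 by (intro tendsto_intros r0) auto
  moreover have "\<forall>\<^sub>F s in at_right 0. fact (Suc k) * (1 / (C1 * s powr (a1 - a2) + C2)) ^ Suc k
      = s powr (1 + real (Suc k) * a2) * (fact (Suc k) / (s * \<phi> s ^ Suc k))"
  proof (rule eventually_at_rightI[of 0 1])
    fix s :: real assume s: "s \<in> {0<..<1}"
    then have s0: "s > 0" by simp
    define q where "q = s powr a2"
    define r where "r = s powr (a1 - a2)"
    have q: "q > 0" "r \<ge> 0" using s0 by (auto simp: q_def r_def)
    have "s powr a1 = q * r" unfolding q_def r_def by (simp add: powr_add[symmetric])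
    then have ph: "\<phi> s = q * (C1 * r + C2)" by (simp add: \<phi>_def mixed_laplace_exponent_def q_def algebra_simps)
    have pw: "s powr (1 + real (Suc k) * a2) = s * q ^ Suc k"
    proof -
      have "s powr (1 + real (Suc k) * a2) = s powr 1 * s powr (real (Suc k) * a2)" by (rule powr_add)
      also have "s powr (real (Suc k) * a2) = (s powr a2) ^ Suc k" using powr_power[of s a2 "Suc k"] s0 by simp
      finally show ?thesis using s0 unfolding q_def by simp
    qed
    have pos: "C1 * r + C2 > 0" using C1 C2 q by (simp add: add_nonneg_pos)
    show "fact (Suc k) * (1 / (C1 * s powr (a1 - a2) + C2)) ^ Suc k
      = s powr (1 + real (Suc k) * a2) * (fact (Suc k) / (s * \<phi> s ^ Suc k))"
    proof -
      define c where "c = C1 * r + C2"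
      have cp: "c > 0" using pos by (simp add: c_def)
      have "s powr (1 + real (Suc k) * a2) * (fact (Suc k) / (s * \<phi> s ^ Suc k))
          = (s * q ^ Suc k) * (fact (Suc k) / (s * (q ^ Suc k * c ^ Suc k)))"
        unfolding pw ph c_def[symmetric] power_mult_distrib ..
      also have "\<dots> = fact (Suc k) / c ^ Suc k"
        using s0 q cp by (simp add: field_simps)
      also have "\<dots> = fact (Suc k) * (1 / (C1 * s powr (a1 - a2) + C2)) ^ Suc k"
        by (simp add: c_def r_def power_one_over)
      finally show ?thesis ..
    qed
  qed simp
  ultimately show ?thesis using C2 by (simp add: Lim_transform_eventually power_one_over field_simps)
qed

theorem mainTheorem2:
  fixes M :: "'a measure" and L :: "real \<Rightarrow> 'a \<Rightarrow> real"
    and C1 C2 \<alpha>1 \<alpha>2 :: real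
  assumes "C1 \<ge> 0" and "C2 > 0" and "C1 + C2 = 1"
    and "0 < \<alpha>2" and "\<alpha>2 < \<alpha>1" and "\<alpha>1 < 1"
    and "mixed_stable_subordinator M C1 C2 \<alpha>1 \<alpha>2 L"
  shows "(\<lambda>t. prob_space.variance M (inverse_subordinator L t)) \<sim>[at_top]
         (\<lambda>t. t powr (2 * \<alpha>2) / C2\<^sup>2 *
              (2 / Gamma (2 * \<alpha>2 + 1) - 1 / (Gamma (\<alpha>2 + 1))\<^sup>2))"
proof -
  define \<phi> where "\<phi> = mixed_laplace_exponent C1 C2 \<alpha>1 \<alpha>2"
  note ms = assms(7)[unfolded mixed_stable_subordinator_def]
  interpret P: prob_space M using ms by blast
  interpret MS: msub M L \<phi>
  proof
    show "\<And>t. t \<ge> 0 \<Longrightarrow> L t \<in> borel_measurable M" using ms by blast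
    show "\<And>\<omega>. \<omega> \<in> space M \<Longrightarrow> L 0 \<omega> = 0" using ms by blast
    show "\<And>\<omega>. \<omega> \<in> space M \<Longrightarrow> mono_on {0..} (\<lambda>t. L t \<omega>)" using ms by blast
    show "\<And>u. u > 0 \<Longrightarrow> \<phi> u > 0"
      using assms(1,2) by (auto simp: \<phi>_def mixed_laplace_exponent_def intro!: add_nonneg_pos)
    fix t u :: real assume tu: "0 \<le> t" "0 \<le> u"
    have "P.expectation (\<lambda>\<omega>. exp (- u * (L t \<omega> - L 0 \<omega>))) = exp (- (t - 0) * \<phi> u)"
      using ms tu unfolding \<phi>_def by auto
    moreover have "P.expectation (\<lambda>\<omega>. exp (- u * (L t \<omega> - L 0 \<omega>))) = P.expectation (\<lambda>\<omega>. exp (- u * L t \<omega>))"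
      using ms by (intro Bochner_Integration.integral_cong) auto
    ultimately show "P.expectation (\<lambda>\<omega>. exp (- u * L t \<omega>)) = exp (- t * \<phi> u)" by simp
  qed
  have lim: "((\<lambda>T. MS.Mk k T / T powr (real (Suc k) * \<alpha>2))
      \<longlongrightarrow> fact (Suc k) / C2 ^ Suc k / Gamma (1 + real (Suc k) * \<alpha>2)) at_top" for k
  proof -
    interpret K: karamata "MS.Mk k" "MS.Gk k" "real (Suc k) * \<alpha>2" "fact (Suc k) / C2 ^ Suc k"
    proof
      show "mono (MS.Mk k)" by (rule MS.Mk_mono)
      show "\<And>t. 0 \<le> MS.Mk k t" by (rule MS.Mk_nonneg)
      show "\<And>s. 0 < s \<Longrightarrow> integrable lborel (\<lambda>t. indicator {0..} t * exp (- (s * t)) * MS.Mk k t)"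
        using MS.Mk_LT by blast
      show "\<And>s. 0 < s \<Longrightarrow> (\<integral>t. indicator {0..} t * exp (- (s * t)) * MS.Mk k t \<partial>lborel) = MS.Gk k s"
        using MS.Mk_LT by blast
      show "((\<lambda>s. s powr (1 + real (Suc k) * \<alpha>2) * MS.Gk k s) \<longlongrightarrow> fact (Suc k) / C2 ^ Suc k) (at_right 0)"
        unfolding MS.Gk_def unfolding \<phi>_def using Gk_lim[OF assms(1,2,4,5), of k] by simp
      show "0 < real (Suc k) * \<alpha>2" using assms(4) by simp
      show "0 < fact (Suc k) / C2 ^ Suc k" using assms(2) by simp
    qed
    show ?thesis by (rule K.karamata_lim)
  qed
  define K where "K = 1 / C2\<^sup>2 * (2 / Gamma (2 * \<alpha>2 + 1) - 1 / (Gamma (\<alpha>2 + 1))\<^sup>2)"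
  have Kpos: "K > 0"
  proof -
    have g: "Gamma (2 * \<alpha>2 + 1) < 2 * (Gamma (\<alpha>2 + 1))^2"
      using gamma_ineq[of \<alpha>2] assms by simp
    have "Gamma (2 * \<alpha>2 + 1) > 0" "Gamma (\<alpha>2 + 1) > 0" using assms(4) by (auto intro!: Gamma_real_pos)
    then have "1 / (Gamma (\<alpha>2 + 1))\<^sup>2 < 2 / Gamma (2 * \<alpha>2 + 1)" using g by (simp add: field_simps)
    then show ?thesis using assms(2) by (simp add: K_def)
  qed
  have l0: "((\<lambda>T. MS.Mk 0 T / T powr \<alpha>2) \<longlongrightarrow> 1 / C2 / Gamma (\<alpha>2 + 1)) at_top"
    using lim[of 0] by (simp add: add.commute)
  have l1: "((\<lambda>T. MS.Mk 1 T / T powr (2 * \<alpha>2)) \<longlongrightarrow> 2 / C2\<^sup>2 / Gamma (2 * \<alpha>2 + 1)) at_top"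
    using lim[of 1] by (simp add: add.commute numeral_2_eq_2 power2_eq_square)
  have lv: "((\<lambda>T. MS.Mk 1 T / T powr (2 * \<alpha>2) - (MS.Mk 0 T / T powr \<alpha>2)\<^sup>2) \<longlongrightarrow> K) at_top"
  proof -
    have "((\<lambda>T. MS.Mk 1 T / T powr (2 * \<alpha>2) - (MS.Mk 0 T / T powr \<alpha>2)\<^sup>2)
        \<longlongrightarrow> 2 / C2\<^sup>2 / Gamma (2 * \<alpha>2 + 1) - (1 / C2 / Gamma (\<alpha>2 + 1))\<^sup>2) at_top"
      by (intro tendsto_intros l0 l1)
    moreover have "2 / C2\<^sup>2 / Gamma (2 * \<alpha>2 + 1) - (1 / C2 / Gamma (\<alpha>2 + 1))\<^sup>2 = K"
    proof -
      have "Gamma (2 * \<alpha>2 + 1) > 0" "Gamma (\<alpha>2 + 1) > 0" using assms(4) by (auto intro!: Gamma_real_pos)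
      then show ?thesis using assms(2) unfolding K_def by (simp add: power_divide field_simps)
    qed
    ultimately show ?thesis by simp
  qed
  have var: "prob_space.variance M (inverse_subordinator L t) = MS.Mk 1 t - (MS.Mk 0 t)^2" for t
  proof -
    have "inverse_subordinator L t = MS.Y t"
      by (auto simp: fun_eq_iff inverse_subordinator_def MS.Y_def MS.S_def)
    then show ?thesis using MS.var_eq by simp
  qed
  show ?thesis
  proof (rule asymp_equivI')
    have "((\<lambda>T. (MS.Mk 1 T / T powr (2 * \<alpha>2) - (MS.Mk 0 T / T powr \<alpha>2)\<^sup>2) / K) \<longlongrightarrow> K / K) at_top"
      using Kpos by (intro tendsto_intros lv) auto
    moreover have "\<forall>\<^sub>F T in at_top. (MS.Mk 1 T / T powr (2 * \<alpha>2) - (MS.Mk 0 T / T powr \<alpha>2)\<^sup>2) / K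
        = prob_space.variance M (inverse_subordinator L T) / (T powr (2 * \<alpha>2) / C2\<^sup>2 *
              (2 / Gamma (2 * \<alpha>2 + 1) - 1 / (Gamma (\<alpha>2 + 1))\<^sup>2))"
      using eventually_gt_at_top[of 0]
    proof eventually_elim
      case (elim T)
      have p2: "T powr (2 * \<alpha>2) = (T powr \<alpha>2)\<^sup>2" using powr_power[of T \<alpha>2 2] elim by simp
      have g: "T powr (2 * \<alpha>2) / C2\<^sup>2 * (2 / Gamma (2 * \<alpha>2 + 1) - 1 / (Gamma (\<alpha>2 + 1))\<^sup>2) = K * (T powr \<alpha>2)\<^sup>2"
        unfolding K_def p2 by simp
      have tp: "T powr \<alpha>2 > 0" using elim by simp
      show ?case unfolding var g unfolding p2 using Kpos tp
        by (simp add: power_divide diff_divide_distrib mult.commute)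
    qed
    ultimately show "((\<lambda>T. prob_space.variance M (inverse_subordinator L T) / (T powr (2 * \<alpha>2) / C2\<^sup>2 *
              (2 / Gamma (2 * \<alpha>2 + 1) - 1 / (Gamma (\<alpha>2 + 1))\<^sup>2))) \<longlongrightarrow> 1) at_top"
      using Kpos by (simp add: Lim_transform_eventually)
  qed
qed


end
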